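(* Let $Y\subseteq R^n$ be a definable set and $\mathcal C$ a special linear decomposition of $Y$. Then for every box $B_1\subseteq R^n$ there is a box $B\supseteq B_1$ such that the collection $\mathcal D=\{B\cap D: D\in\mathcal C\}\setminus\{\emptyset\}$ is a special linear decomposition of $B\cap Y$.
   Context: Throughout, $\mathcal R=\langle R,<,+,0,\{x\mapsto\lambda x\}_{\lambda\in\Lambda}\rangle$ is an ordered vector space over an ordered division ring $\Lambda$; "definable" means definable in $\mathcal R$ with parameters. $R^n$ carries the product of the order topology, $cl$ denotes closure, $\pi:R^n\to R^{n-1}$ is the projection onto the first $n-1$ coordinates, $R^0=\{0\}$. A box is a set $(a_1,b_1)\times\dots\times(a_n,b_n)$ with $a_i<b_i$ in $R$. Linear maps: a linear (affine) map $R^m\to R$ is $x\mapsto\lambda_1x_1+\dots+\lambda_mx_m+a$ with $\lambda_i\in\Lambda$, $a\in R$. For $X\subseteq R^{m}$ and $f,g$ each either a linear map or one of the constant functions $\pm\infty$, with $f<g$ on $X$, put $(f,g)_X=\{(x,y)\in X\times R: f(x)<y<g(x)\}$ and let $\Gamma(f)_X$ be the graph of $f$ restricted to $X$; values at points outside $X$ are those of the linear map. Linear cells: $C\subseteq R$ is a linear cell if it is a singleton or an open interval with endpoints in $R\cup\{\pm\infty\}$; for $n>1$, $C\subseteq R^n$ is a linear cell if $C=\Gamma(f)_X$ with $f$ linear, or $C=(f,g)_X$ with $f,g$ linear or $\pm\infty$, $f<g$ on $X$, where $X\subseteq R^{n-1}$ is a linear cell. Linear decompositions: a linear decomposition of $R$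 is a finite partition of $R$ into linear cells; for $n>1$ a linear decomposition of $R^n$ is a finite partition $\mathcal C$ of $R^n$ into linear cells such that $\pi(\mathcal C)=\{\pi(D):D\in\mathcal C\}$ is a linear decomposition of $R^{n-1}$. For definable $Y\subseteq R^n$, a linear decomposition of $Y$ is $\{D\cap Y: D\in\mathcal C\}\setminus\{\emptyset\}$ for a linear decomposition $\mathcal C$ of $R^n$ each of whose members is contained in or disjoint from $Y$. Special linear decompositions are defined recursively: every linear decomposition of a subset of $R$ is special; for $n>1$ a linear decomposition $\mathcal C$ of $Y\subseteq R^n$ is special if (1) $\pi(\mathcal C)$ is a special linear decomposition of $\pi(Y)$; (2) for every two cells $\Gamma(f)_S,\Gamma(g)_T\in\mathcal C$ and every $V\in\pi(\mathcal C)$, one has $f<g$ on $V$, or $f=g$ on $V$, or $f>g$ on $V$; (3) for every two cells $\Gamma(h)_S,(f,g)_T\in\mathcal C$ there is no $c\in cl(S)\cap cl(T)$ with $f(c)<h(c)<g(c)$. *)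

theory Defs
  imports "HOL-Analysis.Analysis"
begin

text \<open>R is the carrier type 'r (a linearly ordered abelian group whose topology is the
order topology); Lambda is the type 'l (an ordered division ring); scal l x is the scalar
map x |-> l x.\<close>

definition ordered_vs :: "('l::{division_ring,linordered_ring_strict} \<Rightarrow> 'r::linordered_ab_group_add \<Rightarrow> 'r) \<Rightarrow> bool" where
  "ordered_vs scal \<longleftrightarrow>
     (\<forall>a b x. scal (a + b) x = scal a x + scal b x) \<and>
     (\<forall>a x y. scal a (x + y) = scal a x + scal a y) \<and>
     (\<forall>a b x. scal (a * b) x = scal a (scal b x)) \<and>
     (\<forall>x. scal 1 x = x) \<and>
     (\<forall>a x. 0 < a \<longrightarrow> 0 < x \<longrightarrow> 0 < scal a x)"

datatype ('l,'r) tm = Var nat | Par 'r | Zero | Plus "('l,'r) tm" "('l,'r) tm" | Scal 'l "('l,'r) tm"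

datatype ('l,'r) fm = Less "('l,'r) tm" "('l,'r) tm" | Equal "('l,'r) tm" "('l,'r) tm"
  | Neg "('l,'r) fm" | Conj "('l,'r) fm" "('l,'r) fm" | Exi nat "('l,'r) fm"

primrec tval :: "('l \<Rightarrow> 'r::linordered_ab_group_add \<Rightarrow> 'r) \<Rightarrow> (nat \<Rightarrow> 'r) \<Rightarrow> ('l,'r) tm \<Rightarrow> 'r" where
  "tval scal e (Var i) = e i"
| "tval scal e (Par a) = a"
| "tval scal e Zero = 0"
| "tval scal e (Plus s t) = tval scal e s + tval scal e t"
| "tval scal e (Scal l t) = scal l (tval scal e t)"

primrec sat :: "('l \<Rightarrow> 'r::linordered_ab_group_add \<Rightarrow> 'r) \<Rightarrow> (nat \<Rightarrow> 'r) \<Rightarrow> ('l,'r) fm \<Rightarrow> bool" where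
  "sat scal e (Less s t) = (tval scal e s < tval scal e t)"
| "sat scal e (Equal s t) = (tval scal e s = tval scal e t)"
| "sat scal e (Neg p) = (\<not> sat scal e p)"
| "sat scal e (Conj p q) = (sat scal e p \<and> sat scal e q)"
| "sat scal e (Exi i p) = (\<exists>v. sat scal (e(i := v)) p)"

definition Rn :: "nat \<Rightarrow> 'r list set" where
  "Rn n = {x. length x = n}"

definition definable :: "('l \<Rightarrow> 'r::linordered_ab_group_add \<Rightarrow> 'r) \<Rightarrow> nat \<Rightarrow> 'r list set \<Rightarrow> bool" where
  "definable scal n Y \<longleftrightarrow>
     (\<exists>\<phi>. Y = {x. length x = n \<and> sat scal (\<lambda>i. if i < n then x ! i else 0) \<phi>})"

text \<open>Closure in R^m with the product of the order topology.\<close>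
definition cl :: "nat \<Rightarrow> 'r::linorder_topology list set \<Rightarrow> 'r list set" where
  "cl m S = {c. length c = m \<and>
     (\<forall>U. (\<forall>i<m. open (U i) \<and> c ! i \<in> U i) \<longrightarrow>
          (\<exists>s\<in>S. length s = m \<and> (\<forall>i<m. s ! i \<in> U i)))}"

definition proj :: "'r list set \<Rightarrow> 'r list set" where
  "proj X = butlast ` X"

definition is_box :: "nat \<Rightarrow> 'r::linorder list set \<Rightarrow> bool" where
  "is_box n B \<longleftrightarrow> (\<exists>a b. length a = n \<and> length b = n \<and> (\<forall>i<n. a ! i < b ! i) \<and>
       B = {x. length x = n \<and> (\<forall>i<n. a ! i < x ! i \<and> x ! i < b ! i)})"

definition lval :: "('l \<Rightarrow> 'r::linordered_ab_group_add \<Rightarrow> 'r) \<Rightarrow> 'l list \<Rightarrow> 'r \<Rightarrow> 'r list \<Rightarrow> 'r" where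
  "lval scal cs a x = sum_list (map2 scal cs x) + a"

datatype ('l,'r) bnd = NInf | PInf | Lin "'l list" 'r

fun lo_lt :: "('l \<Rightarrow> 'r::linordered_ab_group_add \<Rightarrow> 'r) \<Rightarrow> ('l,'r) bnd \<Rightarrow> 'r list \<Rightarrow> 'r \<Rightarrow> bool" where
  "lo_lt scal NInf x y = True"
| "lo_lt scal PInf x y = False"
| "lo_lt scal (Lin cs a) x y = (lval scal cs a x < y)"

fun hi_gt :: "('l \<Rightarrow> 'r::linordered_ab_group_add \<Rightarrow> 'r) \<Rightarrow> ('l,'r) bnd \<Rightarrow> 'r list \<Rightarrow> 'r \<Rightarrow> bool" where
  "hi_gt scal NInf x y = False"
| "hi_gt scal PInf x y = True"
| "hi_gt scal (Lin cs a) x y = (y < lval scal cs a x)"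

fun bnd_lt :: "('l \<Rightarrow> 'r::linordered_ab_group_add \<Rightarrow> 'r) \<Rightarrow> ('l,'r) bnd \<Rightarrow> ('l,'r) bnd \<Rightarrow> 'r list \<Rightarrow> bool" where
  "bnd_lt scal NInf NInf x = False"
| "bnd_lt scal NInf _ x = True"
| "bnd_lt scal PInf _ x = False"
| "bnd_lt scal (Lin cs a) NInf x = False"
| "bnd_lt scal (Lin cs a) PInf x = True"
| "bnd_lt scal (Lin cs a) (Lin ds b) x = (lval scal cs a x < lval scal ds b x)"

fun bnd_ok :: "nat \<Rightarrow> ('l,'r) bnd \<Rightarrow> bool" where
  "bnd_ok m (Lin cs a) = (length cs = m)"
| "bnd_ok m _ = True"

text \<open>A layer: the graph Gamma(f) of a linear map, or the band (f,g).\<close>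
datatype ('l,'r) layer = Gr "'l list" 'r | Bd "('l,'r) bnd" "('l,'r) bnd"

text \<open>A presented cell in R^n is a list of n layers, top (last coordinate) layer first;
the tail is the presentation of the base cell X in R^(n-1). The empty list presents R^0.\<close>
type_synonym ('l,'r) celld = "('l,'r) layer list"

fun cellset :: "('l \<Rightarrow> 'r::linordered_ab_group_add \<Rightarrow> 'r) \<Rightarrow> ('l,'r) celld \<Rightarrow> 'r list set" where
  "cellset scal [] = {[]}"
| "cellset scal (Gr cs a # d) = {x @ [lval scal cs a x] | x. x \<in> cellset scal d}"
| "cellset scal (Bd f g # d) = {x @ [y] | x y. x \<in> cellset scal d \<and> lo_lt scal f x y \<and> hi_gt scal g x y}"

fun valid_cell :: "('l \<Rightarrow> 'r::linordered_ab_group_add \<Rightarrow> 'r) \<Rightarrow> ('l,'r) celld \<Rightarrow> bool" where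
  "valid_cell scal [] = True"
| "valid_cell scal (Gr cs a # d) = (valid_cell scal d \<and> length cs = length d)"
| "valid_cell scal (Bd f g # d) = (valid_cell scal d \<and> bnd_ok (length d) f \<and> bnd_ok (length d) g
      \<and> (\<forall>x\<in>cellset scal d. bnd_lt scal f g x))"

fun lin_dec :: "('l \<Rightarrow> 'r::linordered_ab_group_add \<Rightarrow> 'r) \<Rightarrow> nat \<Rightarrow> ('l,'r) celld set \<Rightarrow> bool" where
  "lin_dec scal n C \<longleftrightarrow>
     finite C \<and>
     (\<forall>d\<in>C. valid_cell scal d \<and> length d = n \<and> cellset scal d \<noteq> {}) \<and>
     (\<forall>d\<in>C. \<forall>d'\<in>C. d \<noteq> d' \<longrightarrow> cellset scal d \<inter> cellset scal d' = {}) \<and>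
     \<Union>(cellset scal ` C) = Rn n \<and>
     (1 < n \<longrightarrow> lin_dec scal (n - 1) (tl ` C))"

definition lin_dec_of :: "('l \<Rightarrow> 'r::linordered_ab_group_add \<Rightarrow> 'r) \<Rightarrow> nat \<Rightarrow> 'r list set \<Rightarrow> ('l,'r) celld set \<Rightarrow> bool" where
  "lin_dec_of scal n Y D \<longleftrightarrow>
     (\<exists>C. lin_dec scal n C \<and>
          (\<forall>d\<in>C. cellset scal d \<subseteq> Y \<or> cellset scal d \<inter> Y = {}) \<and>
          D = {d\<in>C. cellset scal d \<inter> Y \<noteq> {}})"

definition cond_graphs :: "('l \<Rightarrow> 'r::linordered_ab_group_add \<Rightarrow> 'r) \<Rightarrow> ('l,'r) celld set \<Rightarrow> bool" where
  "cond_graphs scal D \<longleftrightarrow>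
     (\<forall>d\<in>D. \<forall>d'\<in>D. \<forall>cs a ds b. hd d = Gr cs a \<longrightarrow> hd d' = Gr ds b \<longrightarrow>
        (\<forall>V\<in>tl ` D.
           (\<forall>v\<in>cellset scal V. lval scal cs a v < lval scal ds b v) \<or>
           (\<forall>v\<in>cellset scal V. lval scal cs a v = lval scal ds b v) \<or>
           (\<forall>v\<in>cellset scal V. lval scal cs a v > lval scal ds b v)))"

definition cond_bands :: "('l \<Rightarrow> 'r::{linordered_ab_group_add,linorder_topology} \<Rightarrow> 'r) \<Rightarrow> nat \<Rightarrow> ('l,'r) celld set \<Rightarrow> bool" where
  "cond_bands scal m D \<longleftrightarrow>
     (\<forall>d\<in>D. \<forall>d'\<in>D. \<forall>hs h f g. hd d = Gr hs h \<longrightarrow> hd d' = Bd f g \<longrightarrow>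
        \<not> (\<exists>c \<in> cl m (cellset scal (tl d)) \<inter> cl m (cellset scal (tl d')).
              lo_lt scal f c (lval scal hs h c) \<and> hi_gt scal g c (lval scal hs h c)))"

fun special_dec :: "('l \<Rightarrow> 'r::{linordered_ab_group_add,linorder_topology} \<Rightarrow> 'r) \<Rightarrow> nat \<Rightarrow> 'r list set \<Rightarrow> ('l,'r) celld set \<Rightarrow> bool" where
  "special_dec scal n Y D \<longleftrightarrow>
     lin_dec_of scal n Y D \<and>
     (1 < n \<longrightarrow> special_dec scal (n - 1) (proj Y) (tl ` D) \<and>
                cond_graphs scal D \<and> cond_bands scal (n - 1) D)"

text \<open>A collection of subsets of R^n is a special linear decomposition of Y if its members
can be presented as linear cells (with their defining linear maps) so that the
presented collection is a special linear decomposition of Y.\<close>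
definition special_lin_dec :: "('l \<Rightarrow> 'r::{linordered_ab_group_add,linorder_topology} \<Rightarrow> 'r) \<Rightarrow> nat \<Rightarrow> 'r list set \<Rightarrow> 'r list set set \<Rightarrow> bool" where
  "special_lin_dec scal n Y \<C> \<longleftrightarrow> (\<exists>D. special_dec scal n Y D \<and> cellset scal ` D = \<C>)"

end

theory Submission imports Defs begin

lemma ovs_add1: "ordered_vs scal \<Longrightarrow> scal (p + q) x = scal p x + scal q x" by (simp add: ordered_vs_def)
lemma ovs_add2: "ordered_vs scal \<Longrightarrow> scal p (x + y) = scal p x + scal p y" by (simp add: ordered_vs_def)
lemma ovs_one: "ordered_vs scal \<Longrightarrow> scal 1 x = x" by (simp add: ordered_vs_def)
lemma ovs_pos: "ordered_vs scal \<Longrightarrow> 0 < p \<Longrightarrow> 0 < x \<Longrightarrow> 0 < scal p x" by (simp add: ordered_vs_def)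

lemma ovs_zero1: "ordered_vs scal \<Longrightarrow> scal 0 x = 0"
  using ovs_add1[of scal 0 0 x] by simp

lemma ovs_zero2: "ordered_vs scal \<Longrightarrow> scal p 0 = 0"
  using ovs_add2[of scal p 0 0] by simp

lemma ovs_minus2: "ordered_vs scal \<Longrightarrow> scal p (y - x) = scal p y - scal p x"
  using ovs_add2[of scal p "y - x" x] by (simp add: algebra_simps)

lemma ovs_neg1: "ordered_vs scal \<Longrightarrow> scal (- p) x = - scal p x"
  using ovs_add1[of scal p "-p" x] ovs_zero1[of scal x] by (simp add: eq_neg_iff_add_eq_0 add.commute)

lemma ovs_mono_pos: "ordered_vs scal \<Longrightarrow> 0 < p \<Longrightarrow> x < y \<Longrightarrow> scal p x < scal p y"
  using ovs_pos[of scal p "y - x"] ovs_minus2[of scal p y x] by simp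

lemma ovs_mono_neg: "ordered_vs scal \<Longrightarrow> p < 0 \<Longrightarrow> x < y \<Longrightarrow> scal p y < scal p x"
  using ovs_mono_pos[of scal "-p" x y] ovs_neg1[of scal p] by simp

lemma ovs_between:
  fixes scal :: "'l::{division_ring,linordered_ring_strict} \<Rightarrow> 'r::linordered_ab_group_add \<Rightarrow> 'r"
  assumes "ordered_vs scal" "u < y" "y < v"
  shows "min (scal p u) (scal p v) \<le> scal p y \<and> scal p y \<le> max (scal p u) (scal p v)"
proof (cases "p = 0")
  case True thus ?thesis using ovs_zero1[OF assms(1)] by auto
next
  case False
  then consider "0 < p" | "p < 0" by (meson linorder_neqE)
  thus ?thesis
  proof cases
    case 1
    have "scal p u < scal p y" "scal p y < scal p v" using ovs_mono_pos[OF assms(1) 1] assms by auto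
    thus ?thesis by auto
  next
    case 2
    have "scal p y < scal p u" "scal p v < scal p y" using ovs_mono_neg[OF assms(1) 2] assms by auto
    thus ?thesis by auto
  qed
qed

lemma half_props:
  shows "0 < inverse (2::'l::{division_ring,linordered_ring_strict})" "inverse 2 + inverse 2 = (1::'l)"
proof -
  have o: "(0::'l) < 1"
    using zero_le_square[of "1::'l"] zero_neq_one[where 'a='l] by (simp add: order_le_less)
  have t: "(0::'l) < 2" using o by (metis add_pos_pos one_add_one)
  have e: "(2::'l) * inverse 2 = 1" using t by (intro right_inverse) simp
  hence "0 < (2::'l) * inverse 2" using o by simp
  hence "(0 < (2::'l) \<and> 0 < inverse (2::'l)) \<or> ((2::'l) < 0 \<and> inverse (2::'l) < 0)"
    unfolding zero_less_mult_iff .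
  thus "0 < inverse (2::'l)" using t by (meson less_asym)
  have "inverse 2 + inverse 2 = (2::'l) * inverse 2" by (metis one_add_one distrib_right mult_1)
  thus "inverse 2 + inverse 2 = (1::'l)" using e by simp
qed

lemma ovs_dense:
  fixes scal :: "'l::{division_ring,linordered_ring_strict} \<Rightarrow> 'r::linordered_ab_group_add \<Rightarrow> 'r" and u v :: 'r
  assumes "ordered_vs scal" "u < v"
  shows "\<exists>w. u < w \<and> w < v"
proof -
  let ?t = "v - u" let ?h = "scal (inverse 2) ?t"
  have tp: "0 < ?t" using assms by simp
  have hp: "0 < ?h" using ovs_pos[OF assms(1) half_props(1) tp] .
  have "?h + ?h = ?t" using ovs_add1[OF assms(1), of "inverse 2" "inverse 2" ?t] half_props(2)[where 'l='l] ovs_one[OF assms(1)] by (simp del: inverse_eq_divide)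
  hence "?h < ?t" using hp by (metis less_add_same_cancel1)
  thus ?thesis using hp by (intro exI[of _ "u + ?h"]) (simp add: algebra_simps)
qed

lemma lval_zero:
  fixes scal :: "'l::{division_ring,linordered_ring_strict} \<Rightarrow> 'r::linordered_ab_group_add \<Rightarrow> 'r"
  assumes "ordered_vs scal" "length x = k"
  shows "lval scal (replicate k 0) c x = c"
proof -
  have "map2 scal (replicate k 0) x = replicate k 0" using assms
    by (auto simp: list_eq_iff_nth_eq ovs_zero1)
  moreover have "sum_list (replicate k (0::'r)) = 0" by (induct k) auto
  ultimately show ?thesis by (simp add: lval_def)
qed

fun bm :: "('l,'r) bnd \<Rightarrow> ('l list \<times> 'r) set" where
  "bm (Lin cs c) = {(cs,c)}" | "bm NInf = {}" | "bm PInf = {}"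

fun lm :: "('l,'r) layer \<Rightarrow> ('l list \<times> 'r) set" where
  "lm (Gr cs c) = {(cs,c)}" | "lm (Bd f g) = bm f \<union> bm g"

fun maps :: "('l,'r) celld \<Rightarrow> ('l list \<times> 'r) set" where
  "maps [] = {}" | "maps (L # d) = lm L \<union> maps d"

fun lc :: "('l \<Rightarrow> 'r::linordered_ab_group_add \<Rightarrow> 'r) \<Rightarrow> ('l,'r) layer \<Rightarrow> 'r list \<Rightarrow> 'r \<Rightarrow> bool" where
  "lc scal (Gr cs c) x y = (y = lval scal cs c x)"
| "lc scal (Bd f g) x y = (lo_lt scal f x y \<and> hi_gt scal g x y)"

fun layok :: "nat \<Rightarrow> ('l,'r) layer \<Rightarrow> bool" where
  "layok k (Gr cs c) = (length cs = k)" | "layok k (Bd f g) = (bnd_ok k f \<and> bnd_ok k g)"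

fun lbok :: "('l \<Rightarrow> 'r::linordered_ab_group_add \<Rightarrow> 'r) \<Rightarrow> ('l,'r) layer \<Rightarrow> 'r list \<Rightarrow> bool" where
  "lbok scal (Gr cs c) x = True" | "lbok scal (Bd f g) x = bnd_lt scal f g x"

lemma cellset_cons: "cellset scal (L # d) = {x @ [y] | x y. x \<in> cellset scal d \<and> lc scal L x y}"
  by (cases L) auto

lemma snoc_in_cellset: "x @ [y] \<in> cellset scal (L # d) \<longleftrightarrow> x \<in> cellset scal d \<and> lc scal L x y"
  unfolding cellset_cons by auto

lemma in_cellset_cons: "z \<in> cellset scal (L # d) \<longleftrightarrow> (\<exists>x y. z = x @ [y] \<and> x \<in> cellset scal d \<and> lc scal L x y)"
  unfolding cellset_cons by auto

lemma cellset_len: "z \<in> cellset scal d \<Longrightarrow> length z = length d"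
  by (induct d arbitrary: z) (auto simp: in_cellset_cons)

lemma valid_cons: "valid_cell scal (L # d) \<longleftrightarrow> valid_cell scal d \<and> layok (length d) L \<and> (\<forall>x\<in>cellset scal d. lbok scal L x)"
  by (cases L) auto

lemma maps_tl: "maps (tl d) \<subseteq> maps d" by (cases d) auto

definition bx :: "'r::linorder list \<Rightarrow> 'r list \<Rightarrow> nat \<Rightarrow> 'r list set" where
  "bx a b k = {x. length x = k \<and> (\<forall>i<k. a ! i < x ! i \<and> x ! i < b ! i)}"

lemma bx_snoc: "x @ [y] \<in> bx a b (Suc k) \<longleftrightarrow> x \<in> bx a b k \<and> a ! k < y \<and> y < b ! k"
  unfolding bx_def by (auto simp: nth_append less_Suc_eq)

lemma bx_butlast: assumes "z \<in> bx a b (Suc k)" shows "butlast z \<in> bx a b k"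
proof -
  have "z \<noteq> []" using assms unfolding bx_def by auto
  hence "butlast z @ [last z] \<in> bx a b (Suc k)" using assms by simp
  thus ?thesis unfolding bx_snoc by simp
qed

lemma bx_0: "bx a b 0 = {[]}" unfolding bx_def by auto

fun lowb :: "'r \<Rightarrow> nat \<Rightarrow> ('l::zero,'r) bnd \<Rightarrow> ('l,'r) bnd" where
  "lowb a k NInf = Lin (replicate k 0) a" | "lowb a k (Lin cs c) = Lin cs c" | "lowb a k PInf = PInf"

fun uppb :: "'r \<Rightarrow> nat \<Rightarrow> ('l::zero,'r) bnd \<Rightarrow> ('l,'r) bnd" where
  "uppb b k PInf = Lin (replicate k 0) b" | "uppb b k (Lin cs c) = Lin cs c" | "uppb b k NInf = NInf"

fun tlay :: "'r \<Rightarrow> 'r \<Rightarrow> nat \<Rightarrow> ('l::zero,'r) layer \<Rightarrow> ('l,'r) layer" where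
  "tlay a b k (Gr cs c) = Gr cs c" | "tlay a b k (Bd f g) = Bd (lowb a k f) (uppb b k g)"

fun trc :: "'r list \<Rightarrow> 'r list \<Rightarrow> ('l::zero,'r) celld \<Rightarrow> ('l,'r) celld" where
  "trc a b [] = []"
| "trc a b (L # d) = tlay (a ! length d) (b ! length d) (length d) L # trc a b d"

lemma trc_len[simp]: "length (trc a b d) = length d" by (induct d) auto

lemma tl_trc: "tl (trc a b d) = trc a b (tl d)" by (cases d) auto

fun lay :: "'r \<Rightarrow> 'r \<Rightarrow> nat \<Rightarrow> ('l::zero,'r) layer \<Rightarrow> bool \<Rightarrow> ('l,'r) layer set" where
  "lay a b k (Gr cs c) t = {Gr cs c}"
| "lay a b k (Bd f g) t = (if t then {Bd (lowb a k f) (uppb b k g)}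
      \<union> (if f = NInf then {Bd NInf (Lin (replicate k 0) a), Gr (replicate k 0) a} else {})
      \<union> (if g = PInf then {Gr (replicate k 0) b, Bd (Lin (replicate k 0) b) PInf} else {})
     else {Bd f g})"

definition large :: "('l \<Rightarrow> 'r::linordered_ab_group_add \<Rightarrow> 'r) \<Rightarrow> 'r list \<Rightarrow> 'r list \<Rightarrow> nat \<Rightarrow> ('l list \<times> 'r) set \<Rightarrow> bool" where
  "large scal a b m M \<longleftrightarrow> (\<forall>cs c x. (cs, c) \<in> M \<longrightarrow> length cs < m \<longrightarrow> x \<in> bx a b (length cs) \<longrightarrow>
      a ! length cs < lval scal cs c x \<and> lval scal cs c x < b ! length cs)"

lemma exists_mid:
  fixes scal :: "'l::{division_ring,linordered_ring_strict} \<Rightarrow> 'r::linordered_ab_group_add \<Rightarrow> 'r"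
  assumes ovs: "ordered_vs scal" and e: "0 < (e::'r)" and "bnd_lt scal f g x"
  shows "\<exists>y. lo_lt scal f x y \<and> hi_gt scal g x y"
proof -
  have lt1: "\<exists>y. u < y" for u :: 'r using e by (metis less_add_same_cancel1)
  have lt2: "\<exists>y. y < u" for u :: 'r using e by (intro exI[of _ "u - e"]) simp
  show ?thesis
  proof (cases f)
    case NInf
    show ?thesis
    proof (cases g)
      case (Lin ds d)
      obtain y where "y < lval scal ds d x" using lt2 by blast
      thus ?thesis using NInf Lin by auto
    qed (use NInf assms(3) in auto)
  next
    case PInf
    thus ?thesis using assms(3) by auto
  next
    case (Lin cs c)
    show ?thesis
    proof (cases g)
      case (Lin ds d)
      hence "lval scal cs c x < lval scal ds d x" using \<open>f = Lin cs c\<close> assms(3) by simp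
      then obtain y where "lval scal cs c x < y" "y < lval scal ds d x" using ovs_dense[OF ovs] by blast
      thus ?thesis using \<open>f = Lin cs c\<close> Lin by auto
    next
      case PInf
      obtain y where "lval scal cs c x < y" using lt1 by blast
      thus ?thesis using \<open>f = Lin cs c\<close> PInf by auto
    qed (use Lin assms(3) in auto)
  qed
qed

lemma exists_y:
  fixes scal :: "'l::{division_ring,linordered_ring_strict} \<Rightarrow> 'r::linordered_ab_group_add \<Rightarrow> 'r"
  assumes ovs: "ordered_vs scal" and e: "0 < (e::'r)" and "lbok scal L x"
  shows "\<exists>y. lc scal L x y"
  using assms exists_mid[OF ovs e] by (cases L) auto

lemma cl_mono: "S \<subseteq> T \<Longrightarrow> cl m S \<subseteq> cl m T"
  unfolding cl_def by blast

declare lin_dec.simps[simp del] special_dec.simps[simp del]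

lemma lin_dec_unf: "lin_dec scal k C \<longleftrightarrow>
     finite C \<and>
     (\<forall>d\<in>C. valid_cell scal d \<and> length d = k \<and> cellset scal d \<noteq> {}) \<and>
     (\<forall>d\<in>C. \<forall>d'\<in>C. d \<noteq> d' \<longrightarrow> cellset scal d \<inter> cellset scal d' = {}) \<and>
     \<Union>(cellset scal ` C) = Rn k \<and>
     (1 < k \<longrightarrow> lin_dec scal (k - 1) (tl ` C))"
  by (rule lin_dec.simps)

lemma lin_dec_D:
  assumes "lin_dec scal k C"
  shows "finite C" "\<And>d. d\<in>C \<Longrightarrow> valid_cell scal d" "\<And>d. d\<in>C \<Longrightarrow> length d = k"
    "\<And>d. d\<in>C \<Longrightarrow> cellset scal d \<noteq> {}"
    "\<And>d d'. d\<in>C \<Longrightarrow> d'\<in>C \<Longrightarrow> d \<noteq> d' \<Longrightarrow> cellset scal d \<inter> cellset scal d' = {}"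
    "\<Union>(cellset scal ` C) = Rn k" "1 < k \<Longrightarrow> lin_dec scal (k - 1) (tl ` C)"
proof -
  note c = lin_dec_unf[THEN iffD1, OF assms]
  show "finite C" using c by (rule conjunct1)
  show "\<And>d. d\<in>C \<Longrightarrow> valid_cell scal d" using c by simp
  show "\<And>d. d\<in>C \<Longrightarrow> length d = k" using c by simp
  show "\<And>d. d\<in>C \<Longrightarrow> cellset scal d \<noteq> {}" using c by simp
  show "\<And>d d'. d\<in>C \<Longrightarrow> d'\<in>C \<Longrightarrow> d \<noteq> d' \<Longrightarrow> cellset scal d \<inter> cellset scal d' = {}" using c by simp
  show "\<Union>(cellset scal ` C) = Rn k" using c by simp
  show "1 < k \<Longrightarrow> lin_dec scal (k - 1) (tl ` C)" using c by simp
qed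

lemma lin_dec_I:
  assumes "finite C" "\<And>d. d\<in>C \<Longrightarrow> valid_cell scal d" "\<And>d. d\<in>C \<Longrightarrow> length d = k"
    "\<And>d. d\<in>C \<Longrightarrow> cellset scal d \<noteq> {}"
    "\<And>d d'. d\<in>C \<Longrightarrow> d'\<in>C \<Longrightarrow> d \<noteq> d' \<Longrightarrow> cellset scal d \<inter> cellset scal d' = {}"
    "\<Union>(cellset scal ` C) = Rn k" "1 < k \<Longrightarrow> lin_dec scal (k - 1) (tl ` C)"
  shows "lin_dec scal k C"
proof (rule lin_dec_unf[THEN iffD2], intro conjI ballI impI)
  show "1 < k \<Longrightarrow> lin_dec scal (k - 1) (tl ` C)" by (rule assms(7))
qed (use assms in auto)

lemma lin_dec_ne: assumes "lin_dec scal k C" shows "C \<noteq> {}"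
proof -
  have "replicate k undefined \<in> Rn k" by (simp add: Rn_def)
  thus ?thesis using lin_dec_D(6)[OF assms] by auto
qed

lemma lin_dec_0: "lin_dec scal 0 C \<longleftrightarrow> C = {[]}"
proof
  assume h: "lin_dec scal 0 C"
  hence "\<forall>d\<in>C. d = []" using lin_dec_D(3)[OF h] by auto
  moreover have "C \<noteq> {}" using lin_dec_ne[OF h] .
  ultimately show "C = {[]}" by auto
next
  assume h: "C = {[]}"
  show "lin_dec scal 0 C" by (rule lin_dec_I) (use h in \<open>auto simp: Rn_def\<close>)
qed

lemma lin_dec_tl: assumes "lin_dec scal (Suc k) C" shows "lin_dec scal k (tl ` C)"
proof (cases k)
  case 0
  have "\<forall>d\<in>C. length d = 1" using lin_dec_D(3)[OF assms] 0 by auto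
  moreover have "length d = 1 \<Longrightarrow> tl d = []" for d :: "('a,'b) celld" by (cases d) auto
  ultimately have "\<forall>d\<in>C. tl d = []" using 0 by auto
  moreover have "C \<noteq> {}" using lin_dec_ne[OF assms] .
  ultimately have "tl ` C = {[]}" by auto
  thus ?thesis using 0 lin_dec_0 by auto
next
  case (Suc m)
  have "1 < Suc k" using Suc by simp
  thus ?thesis using lin_dec_D(7)[OF assms] by simp
qed

section \<open>Special decompositions with a bound on the linear maps used\<close>

fun specM :: "('l \<Rightarrow> 'r::{linordered_ab_group_add,linorder_topology} \<Rightarrow> 'r) \<Rightarrow> nat \<Rightarrow> 'r list set \<Rightarrow> ('l,'r) celld set
    \<Rightarrow> ('l list \<times> 'r) set \<Rightarrow> bool" where
  "specM scal k Y D M \<longleftrightarrow>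
     (\<exists>C. lin_dec scal k C \<and> (\<forall>d\<in>C. cellset scal d \<subseteq> Y \<or> cellset scal d \<inter> Y = {}) \<and>
          D = {d\<in>C. cellset scal d \<inter> Y \<noteq> {}} \<and> (\<forall>d\<in>C. maps d \<subseteq> M)) \<and>
     (1 < k \<longrightarrow> specM scal (k - 1) (proj Y) (tl ` D) M \<and> cond_graphs scal D \<and> cond_bands scal (k - 1) D)"

declare specM.simps[simp del]

lemma finite_bm: "finite (bm f)" by (cases f) auto
lemma finite_lm: "finite (lm L)" by (cases L) (auto simp: finite_bm)
lemma finite_maps: "finite (maps d)" by (induct d) (auto simp: finite_lm)

lemma specM_mono: "specM scal k Y D M \<Longrightarrow> M \<subseteq> M' \<Longrightarrow> specM scal k Y D M'"
proof (induct k arbitrary: Y D)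
  case 0
  thus ?case unfolding specM.simps[of scal 0] by blast
next
  case (Suc k)
  have h: "(\<exists>C. lin_dec scal (Suc k) C \<and> (\<forall>d\<in>C. cellset scal d \<subseteq> Y \<or> cellset scal d \<inter> Y = {}) \<and>
          D = {d\<in>C. cellset scal d \<inter> Y \<noteq> {}} \<and> (\<forall>d\<in>C. maps d \<subseteq> M))"
    "1 < Suc k \<longrightarrow> specM scal k (proj Y) (tl ` D) M \<and> cond_graphs scal D \<and> cond_bands scal k D"
    using Suc.prems(1)[unfolded specM.simps[of scal "Suc k"]] by auto
  have "1 < Suc k \<longrightarrow> specM scal k (proj Y) (tl ` D) M' \<and> cond_graphs scal D \<and> cond_bands scal k D"
    using h(2) Suc.hyps Suc.prems(2) by blast
  moreover have "(\<exists>C. lin_dec scal (Suc k) C \<and> (\<forall>d\<in>C. cellset scal d \<subseteq> Y \<or> cellset scal d \<inter> Y = {}) \<and>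
          D = {d\<in>C. cellset scal d \<inter> Y \<noteq> {}} \<and> (\<forall>d\<in>C. maps d \<subseteq> M'))"
    using h(1) Suc.prems(2) by blast
  ultimately show ?case unfolding specM.simps[of scal "Suc k"] by simp
qed

lemma specM_ex: "special_dec scal k Y D \<Longrightarrow> \<exists>M. finite M \<and> specM scal k Y D M"
proof (induct k arbitrary: Y D)
  case 0
  obtain C where C: "lin_dec scal 0 C" "\<forall>d\<in>C. cellset scal d \<subseteq> Y \<or> cellset scal d \<inter> Y = {}"
      "D = {d\<in>C. cellset scal d \<inter> Y \<noteq> {}}"
    using 0[unfolded special_dec.simps[of scal 0]] unfolding lin_dec_of_def by blast
  have "finite (\<Union>d\<in>C. maps d)" using lin_dec_D(1)[OF C(1)] finite_maps by blast
  moreover have "specM scal 0 Y D (\<Union>d\<in>C. maps d)" unfolding specM.simps[of scal 0] using C by blast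
  ultimately show ?case by blast
next
  case (Suc k)
  have h: "lin_dec_of scal (Suc k) Y D"
    "1 < Suc k \<longrightarrow> special_dec scal k (proj Y) (tl ` D) \<and> cond_graphs scal D \<and> cond_bands scal k D"
    using Suc.prems[unfolded special_dec.simps[of scal "Suc k"]] by auto
  obtain C where C: "lin_dec scal (Suc k) C" "\<forall>d\<in>C. cellset scal d \<subseteq> Y \<or> cellset scal d \<inter> Y = {}"
      "D = {d\<in>C. cellset scal d \<inter> Y \<noteq> {}}"
    using h(1) unfolding lin_dec_of_def by blast
  define M1 where "M1 = (\<Union>d\<in>C. maps d)"
  have f1: "finite M1" unfolding M1_def using lin_dec_D(1)[OF C(1)] finite_maps by blast
  show ?case
  proof (cases "1 < Suc k")
    case True
    obtain M2 where M2: "finite M2" "specM scal k (proj Y) (tl ` D) M2" using Suc.hyps h(2) True by blast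
    have "specM scal k (proj Y) (tl ` D) (M1 \<union> M2)" using specM_mono[OF M2(2)] by blast
    hence "specM scal (Suc k) Y D (M1 \<union> M2)"
      unfolding specM.simps[of scal "Suc k"] using C h(2) True unfolding M1_def by auto
    thus ?thesis using f1 M2(1) by blast
  next
    case False
    have "specM scal (Suc k) Y D M1"
      unfolding specM.simps[of scal "Suc k"] using C False unfolding M1_def by auto
    thus ?thesis using f1 by blast
  qed
qed

lemma hd_trc_Gr: "hd (trc a b d) = Gr cs c \<Longrightarrow> hd d = Gr cs c"
proof (cases d)
  case (Cons L d0) thus "hd (trc a b d) = Gr cs c \<Longrightarrow> hd d = Gr cs c" by (cases L) auto
qed simp

lemma hd_trc_Bd: "hd (trc a b d) = Bd f' g' \<Longrightarrow> d \<noteq> [] \<Longrightarrow>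
   \<exists>f g d0. d = Bd f g # d0 \<and> f' = lowb (a ! length d0) (length d0) f \<and> g' = uppb (b ! length d0) (length d0) g"
proof (cases d)
  case (Cons L d0) thus "hd (trc a b d) = Bd f' g' \<Longrightarrow> d \<noteq> [] \<Longrightarrow> ?thesis" by (cases L) auto
qed simp

lemma lo_lowb: "lo_lt scal (lowb a' k f) x y \<Longrightarrow> lo_lt scal f x y" by (cases f) auto
lemma hi_uppb: "hi_gt scal (uppb b' k g) x y \<Longrightarrow> hi_gt scal g x y" by (cases g) auto

lemma specM_D:
  assumes "specM scal k Y D M"
  shows "\<exists>C. lin_dec scal k C \<and> (\<forall>d\<in>C. cellset scal d \<subseteq> Y \<or> cellset scal d \<inter> Y = {}) \<and>
          D = {d\<in>C. cellset scal d \<inter> Y \<noteq> {}} \<and> (\<forall>d\<in>C. maps d \<subseteq> M)"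
    "1 < k \<Longrightarrow> specM scal (k - 1) (proj Y) (tl ` D) M \<and> cond_graphs scal D \<and> cond_bands scal (k - 1) D"
  using assms[unfolded specM.simps[of scal k]] by auto

lemma specM_cells: "specM scal k Y D M \<Longrightarrow> d \<in> D \<Longrightarrow> valid_cell scal d \<and> length d = k \<and> maps d \<subseteq> M"
  using specM_D(1) lin_dec_D(2,3) by blast

section \<open>Working context: a fixed large box\<close>

locale bxctx =
  fixes scal :: "'l::{division_ring,linordered_ring_strict} \<Rightarrow> 'r::{linordered_ab_group_add,linorder_topology} \<Rightarrow> 'r"
    and a b :: "'r list" and n :: nat and M :: "('l list \<times> 'r) set"
  assumes ovs: "ordered_vs scal" and la: "length a = n" and lb: "length b = n"
    and ab: "\<And>i. i < n \<Longrightarrow> a ! i < b ! i" and lg: "large scal a b n M"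
begin

lemma lg': "(cs, c) \<in> M \<Longrightarrow> length cs = k \<Longrightarrow> k < n \<Longrightarrow> x \<in> bx a b k \<Longrightarrow>
    a ! k < lval scal cs c x \<and> lval scal cs c x < b ! k"
  using lg unfolding large_def by blast

lemma bx_len: "x \<in> bx a b k \<Longrightarrow> length x = k" unfolding bx_def by auto

lemma lz: "x \<in> bx a b k \<Longrightarrow> lval scal (replicate k 0) c x = c"
  using lval_zero[OF ovs] bx_len by blast

lemma lo_tlay:
  assumes "k < n" "x \<in> bx a b k" "bnd_ok k f" "bm f \<subseteq> M"
  shows "lo_lt scal (lowb (a ! k) k f) x y \<longleftrightarrow> lo_lt scal f x y \<and> a ! k < y"
proof (cases f)
  case (Lin cs c)
  thus ?thesis using lg'[of cs c k x] assms by auto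
qed (use assms lz in auto)

lemma hi_tlay:
  assumes "k < n" "x \<in> bx a b k" "bnd_ok k g" "bm g \<subseteq> M"
  shows "hi_gt scal (uppb (b ! k) k g) x y \<longleftrightarrow> hi_gt scal g x y \<and> y < b ! k"
proof (cases g)
  case (Lin cs c)
  thus ?thesis using lg'[of cs c k x] assms by auto
qed (use assms lz in auto)

lemma lo_inside: "k < n \<Longrightarrow> x \<in> bx a b k \<Longrightarrow> bnd_ok k f \<Longrightarrow> bm f \<subseteq> M \<Longrightarrow> f \<noteq> NInf \<Longrightarrow>
   lo_lt scal f x y \<Longrightarrow> a ! k < y"
  using lo_tlay[of k x f y] by (cases f) auto

lemma hi_inside: "k < n \<Longrightarrow> x \<in> bx a b k \<Longrightarrow> bnd_ok k g \<Longrightarrow> bm g \<subseteq> M \<Longrightarrow> g \<noteq> PInf \<Longrightarrow>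
   hi_gt scal g x y \<Longrightarrow> y < b ! k"
  using hi_tlay[of k x g y] by (cases g) auto

lemma tlay_lc:
  assumes "k < n" "x \<in> bx a b k" "layok k L" "lm L \<subseteq> M"
  shows "lc scal (tlay (a ! k) (b ! k) k L) x y \<longleftrightarrow> lc scal L x y \<and> a ! k < y \<and> y < b ! k"
proof (cases L)
  case (Gr cs c)
  thus ?thesis using lg'[of cs c k x] assms by auto
next
  case (Bd f g)
  thus ?thesis using lo_tlay[of k x f y] hi_tlay[of k x g y] assms by auto
qed

lemma tlay_bnd:
  assumes "k < n" "x \<in> bx a b k" "layok k L" "lm L \<subseteq> M" "lbok scal L x"
  shows "lbok scal (tlay (a ! k) (b ! k) k L) x"
proof (cases L)
  case (Bd f g)
  have ab': "a ! k < b ! k" using ab assms(1) .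
  show ?thesis
  proof (cases f)
    case (Lin cs c)
    note fl = this
    show ?thesis
    proof (cases g)
      case PInf thus ?thesis using Bd fl lg'[of cs c k x] assms lz by auto
    qed (use Bd fl assms in auto)
  next
    case NInf
    note fl = this
    show ?thesis
    proof (cases g)
      case PInf thus ?thesis using Bd fl assms lz ab' by auto
    next
      case (Lin ds d) thus ?thesis using Bd fl lg'[of ds d k x] assms lz by auto
    qed (use Bd fl assms in auto)
  qed (use Bd assms in auto)
qed simp

lemma trc_cellset:
  "valid_cell scal d \<Longrightarrow> length d \<le> n \<Longrightarrow> maps d \<subseteq> M \<Longrightarrow>
    cellset scal (trc a b d) = cellset scal d \<inter> bx a b (length d)"
proof (induct d)
  case Nil thus ?case by (simp add: bx_0)
next
  case (Cons L d)
  have v: "valid_cell scal d" "layok (length d) L" using Cons.prems(1) valid_cons by auto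
  have IH: "cellset scal (trc a b d) = cellset scal d \<inter> bx a b (length d)" using Cons v by auto
  show ?case
  proof (intro set_eqI iffI)
    fix z assume "z \<in> cellset scal (trc a b (L # d))"
    then obtain x y where z: "z = x @ [y]" "x \<in> cellset scal (trc a b d)"
       "lc scal (tlay (a ! length d) (b ! length d) (length d) L) x y"
      by (auto simp: in_cellset_cons)
    thus "z \<in> cellset scal (L # d) \<inter> bx a b (length (L # d))"
      using IH tlay_lc[of "length d" x L y] v Cons.prems by (auto simp: snoc_in_cellset bx_snoc)
  next
    fix z assume "z \<in> cellset scal (L # d) \<inter> bx a b (length (L # d))"
    then obtain x y where z: "z = x @ [y]" "x \<in> cellset scal d" "lc scal L x y" "z \<in> bx a b (Suc (length d))"
      by (auto simp: in_cellset_cons)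
    thus "z \<in> cellset scal (trc a b (L # d))"
      using IH tlay_lc[of "length d" x L y] v Cons.prems by (auto simp: snoc_in_cellset bx_snoc)
  qed
qed

lemma trc_valid:
  "valid_cell scal d \<Longrightarrow> length d \<le> n \<Longrightarrow> maps d \<subseteq> M \<Longrightarrow> valid_cell scal (trc a b d)"
proof (induct d)
  case Nil thus ?case by simp
next
  case (Cons L d)
  have v: "valid_cell scal d" "layok (length d) L" "\<forall>x\<in>cellset scal d. lbok scal L x"
    using Cons.prems(1) valid_cons by auto
  have IH: "valid_cell scal (trc a b d)" using Cons v by auto
  have cs: "cellset scal (trc a b d) = cellset scal d \<inter> bx a b (length d)"
    using trc_cellset v Cons.prems by auto
  have lk: "layok (length d) (tlay (a ! length d) (b ! length d) (length d) L)"
    using v(2) by (cases L; auto elim!: bnd_ok.elims)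
  show ?case unfolding trc.simps valid_cons trc_len
    using IH lk cs tlay_bnd v Cons.prems by auto
qed


lemma lo_below: "k < n \<Longrightarrow> x \<in> bx a b k \<Longrightarrow> bnd_ok k f \<Longrightarrow> bm f \<subseteq> M \<Longrightarrow> f \<noteq> PInf \<Longrightarrow>
   b ! k \<le> y \<Longrightarrow> lo_lt scal f x y"
  using lg' by (cases f) force+

lemma hi_above: "k < n \<Longrightarrow> x \<in> bx a b k \<Longrightarrow> bnd_ok k g \<Longrightarrow> bm g \<subseteq> M \<Longrightarrow> g \<noteq> NInf \<Longrightarrow>
   y \<le> a ! k \<Longrightarrow> hi_gt scal g x y"
  using lg' by (cases g) force+

lemma lay_sub:
  assumes "k < n" "layok k L0" "lm L0 \<subseteq> M" "t \<Longrightarrow> x \<in> bx a b k"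
    and "L \<in> lay (a ! k) (b ! k) k L0 t" "lc scal L x y" "lbok scal L0 x"
  shows "lc scal L0 x y"
proof (cases L0)
  case (Gr cs c) thus ?thesis using assms by auto
next
  case (Bd f g)
  show ?thesis
  proof (cases t)
    case False thus ?thesis using assms Bd by auto
  next
    case True
    hence x: "x \<in> bx a b k" using assms by auto
    have ab': "a ! k < b ! k" using ab assms(1) .
    have okf: "bnd_ok k f" "bm f \<subseteq> M" "bnd_ok k g" "bm g \<subseteq> M" using assms Bd by auto
    have nf: "f \<noteq> PInf" "g \<noteq> NInf" using assms(7) Bd by (auto elim: bnd_lt.elims)
    show ?thesis
      using assms(5,6) True Bd lo_tlay[OF assms(1) x okf(1,2)] hi_tlay[OF assms(1) x okf(3,4)]
        lz[OF x] ab' lo_below[OF assms(1) x okf(1,2) nf(1)] hi_above[OF assms(1) x okf(3,4) nf(2)]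
      by (auto split: if_splits)
  qed
qed

lemma lay_cover:
  assumes "k < n" "layok k L0" "lm L0 \<subseteq> M" "t \<Longrightarrow> x \<in> bx a b k" "lc scal L0 x y"
  shows "\<exists>L\<in>lay (a ! k) (b ! k) k L0 t. lc scal L x y"
proof (cases L0)
  case (Gr cs c) thus ?thesis using assms by auto
next
  case (Bd f g)
  show ?thesis
  proof (cases t)
    case False thus ?thesis using assms Bd by auto
  next
    case True
    hence x: "x \<in> bx a b k" using assms by auto
    have okf: "bnd_ok k f" "bm f \<subseteq> M" "bnd_ok k g" "bm g \<subseteq> M" using assms Bd by auto
    have lf: "lo_lt scal f x y" and hg: "hi_gt scal g x y" using assms(5) Bd by auto
    let ?z = "replicate k 0"
    consider "y < a ! k" | "y = a ! k" | "a ! k < y \<and> y < b ! k" | "y = b ! k" | "b ! k < y"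
      by fastforce
    thus ?thesis
    proof cases
      case 1
      hence "f = NInf" using lo_inside[OF assms(1) x okf(1,2) _ lf] by force
      thus ?thesis using True Bd 1 lz[OF x] by (intro bexI[of _ "Bd NInf (Lin ?z (a ! k))"]) auto
    next
      case 2
      hence "f = NInf" using lo_inside[OF assms(1) x okf(1,2) _ lf] by force
      thus ?thesis using True Bd 2 lz[OF x] by (intro bexI[of _ "Gr ?z (a ! k)"]) auto
    next
      case 3
      thus ?thesis using True Bd lf hg lo_tlay[OF assms(1) x okf(1,2)] hi_tlay[OF assms(1) x okf(3,4)]
        by (intro bexI[of _ "Bd (lowb (a ! k) k f) (uppb (b ! k) k g)"]) auto
    next
      case 4
      hence "g = PInf" using hi_inside[OF assms(1) x okf(3,4) _ hg] by force
      thus ?thesis using True Bd 4 lz[OF x] by (intro bexI[of _ "Gr ?z (b ! k)"]) auto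
    next
      case 5
      hence "g = PInf" using hi_inside[OF assms(1) x okf(3,4) _ hg] by force
      thus ?thesis using True Bd 5 lz[OF x] by (intro bexI[of _ "Bd (Lin ?z (b ! k)) PInf"]) auto
    qed
  qed
qed

lemma lay_disj:
  assumes "k < n" "layok k L0" "lm L0 \<subseteq> M" "t \<Longrightarrow> x \<in> bx a b k"
    and "L \<in> lay (a ! k) (b ! k) k L0 t" "L' \<in> lay (a ! k) (b ! k) k L0 t"
    and "lc scal L x y" "lc scal L' x y"
  shows "L = L'"
proof (cases L0)
  case (Gr cs c) thus ?thesis using assms by auto
next
  case (Bd f g)
  show ?thesis
  proof (cases t)
    case False thus ?thesis using assms Bd by auto
  next
    case True
    hence x: "x \<in> bx a b k" using assms by auto
    have ab': "a ! k < b ! k" using ab assms(1) .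
    have okf: "bnd_ok k f" "bm f \<subseteq> M" "bnd_ok k g" "bm g \<subseteq> M" using assms Bd by auto
    have mid: "lc scal (Bd (lowb (a ! k) k f) (uppb (b ! k) k g)) x y \<Longrightarrow> a ! k < y \<and> y < b ! k"
      using lo_tlay[OF assms(1) x okf(1,2)] hi_tlay[OF assms(1) x okf(3,4)] by auto
    show ?thesis
      using assms(5-8) True Bd mid lz[OF x] ab'
      by (auto split: if_splits)
  qed
qed

lemma lay_out:
  assumes "k < n" "layok k L0" "lm L0 \<subseteq> M" "x \<in> bx a b k"
    and "L \<in> lay (a ! k) (b ! k) k L0 True" "L \<noteq> tlay (a ! k) (b ! k) k L0" "lc scal L x y"
  shows "\<not> (a ! k < y \<and> y < b ! k)"
  using assms lz[OF assms(4)] by (cases L0) (auto split: if_splits)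

lemma lay_ok:
  assumes "k < n" "layok k L0" "lm L0 \<subseteq> M" "t \<Longrightarrow> x \<in> bx a b k" "lbok scal L0 x"
    and "L \<in> lay (a ! k) (b ! k) k L0 t"
  shows "layok k L \<and> lbok scal L x"
proof (cases L0)
  case (Gr cs c) thus ?thesis using assms by auto
next
  case (Bd f g)
  show ?thesis
  proof (cases t)
    case False thus ?thesis using assms Bd by auto
  next
    case True
    hence x: "x \<in> bx a b k" using assms by auto
    have tb: "lbok scal (tlay (a ! k) (b ! k) k L0) x" using tlay_bnd[OF assms(1) x assms(2,3,5)] .
    have lk: "layok k (tlay (a ! k) (b ! k) k L0)"
      using assms(2) Bd by (auto elim!: bnd_ok.elims)
    have ab': "a ! k < b ! k" using ab assms(1) .
    show ?thesis
      using assms(6) True Bd tb lk lz[OF x] ab' by (auto split: if_splits)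
  qed
qed

lemma lay_tlay: "tlay a' b' k L0 \<in> lay a' b' k L0 True"
  by (cases L0) auto

lemma lay_fin: "finite (lay a' b' k L0 t)"
  by (cases L0) auto


lemma refine:
  assumes "lin_dec scal k C" "k \<le> n" "\<And>d. d \<in> C \<Longrightarrow> maps d \<subseteq> M"
  shows "\<exists>C'. lin_dec scal k C' \<and> (\<forall>d\<in>C. cellset scal (trc a b d) \<noteq> {} \<longrightarrow> trc a b d \<in> C') \<and>
     (\<forall>q\<in>C'. \<exists>d\<in>C. cellset scal q \<subseteq> cellset scal d \<and> (q = trc a b d \<or> cellset scal q \<inter> bx a b k = {}))"
  using assms
proof (induct k arbitrary: C)
  case 0
  have C: "C = {[]}" using lin_dec_0[THEN iffD1, OF 0(1)] .
  show ?case by (rule exI[of _ C]) (use 0 C in auto)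
next
  case (Suc k C)
  have kn: "k < n" using Suc.prems by simp
  obtain e :: 'r where e: "0 < e" using ab[of 0] kn by (metis diff_gt_0_iff_gt gr_zeroI not_less0)
  define C0 where "C0 = tl ` C"
  have L0: "lin_dec scal k C0" using lin_dec_tl Suc.prems(1) C0_def by auto
  have mC0: "\<And>d. d\<in>C0 \<Longrightarrow> maps d \<subseteq> M" using Suc.prems(3) maps_tl unfolding C0_def by blast
  have "\<exists>C''. lin_dec scal k C'' \<and> (\<forall>d\<in>C0. cellset scal (trc a b d) \<noteq> {} \<longrightarrow> trc a b d \<in> C'') \<and>
     (\<forall>q\<in>C''. \<exists>d\<in>C0. cellset scal q \<subseteq> cellset scal d \<and> (q = trc a b d \<or> cellset scal q \<inter> bx a b k = {}))"
    by (rule Suc.hyps[OF L0]) (use kn mC0 in auto)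
  then obtain C'' where L'': "lin_dec scal k C''"
    and P1: "\<And>d. d\<in>C0 \<Longrightarrow> cellset scal (trc a b d) \<noteq> {} \<Longrightarrow> trc a b d \<in> C''"
    and P2: "\<And>q. q\<in>C'' \<Longrightarrow> \<exists>d\<in>C0. cellset scal q \<subseteq> cellset scal d \<and> (q = trc a b d \<or> cellset scal q \<inter> bx a b k = {})"
    by blast
  have formC: "\<exists>L0 d0. d = L0 # d0" if h: "d \<in> C" for d
    using lin_dec_D(3)[OF Suc.prems(1) that] by (cases d) auto
  have cC: "valid_cell scal d0 \<and> layok k L0 \<and> (\<forall>x\<in>cellset scal d0. lbok scal L0 x) \<and> lm L0 \<subseteq> M
      \<and> maps d0 \<subseteq> M \<and> length d0 = k \<and> d0 \<in> C0" if h: "L0 # d0 \<in> C" for L0 d0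
  proof -
    have "valid_cell scal (L0 # d0)" "length (L0 # d0) = Suc k" "maps (L0 # d0) \<subseteq> M"
      using lin_dec_D(2,3)[OF Suc.prems(1) h] Suc.prems(3)[OF h] by auto
    moreover have "d0 \<in> C0" unfolding C0_def using h by force
    ultimately show ?thesis by (auto simp: valid_cons)
  qed
  have cC'': "valid_cell scal p \<and> length p = k \<and> cellset scal p \<noteq> {}" if h: "p \<in> C''" for p
    using lin_dec_D(2,3,4)[OF L'' that] by auto
  have par: "cellset scal p \<subseteq> cellset scal d0"
    if h: "p \<in> C''" "L0 # d0 \<in> C" "x \<in> cellset scal p" "x \<in> cellset scal d0" for p L0 d0 x
  proof -
    obtain d where d: "d \<in> C0" "cellset scal p \<subseteq> cellset scal d" using P2[OF h(1)] by blast
    have "d0 \<in> C0" using cC[OF h(2)] by blast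
    hence "d = d0" using lin_dec_D(5)[OF L0 d(1) \<open>d0 \<in> C0\<close>] d(2) h(3,4) by blast
    thus ?thesis using d by simp
  qed
  have notT: "cellset scal p \<inter> bx a b k = {}"
    if h: "p \<in> C''" "L0 # d0 \<in> C" "cellset scal p \<subseteq> cellset scal d0" "p \<noteq> trc a b d0" for p L0 d0
  proof -
    obtain d where d: "d \<in> C0" "cellset scal p \<subseteq> cellset scal d" "p = trc a b d \<or> cellset scal p \<inter> bx a b k = {}"
      using P2[OF h(1)] by blast
    obtain x where x: "x \<in> cellset scal p" using cC''[OF h(1)] by blast
    have "d0 \<in> C0" using cC[OF h(2)] by blast
    hence "d = d0" using lin_dec_D(5)[OF L0 d(1) \<open>d0 \<in> C0\<close>] d(2) h(3) x by blast
    thus ?thesis using d h(4) by auto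
  qed
  have isT: "cellset scal (trc a b d0) = cellset scal d0 \<inter> bx a b k" if h: "L0 # d0 \<in> C" for L0 d0
    using trc_cellset[of d0] cC[OF h] kn by auto
  define C' where "C' = {L # p | L p. p \<in> C'' \<and> (\<exists>L0 d0. L0 # d0 \<in> C \<and> cellset scal p \<subseteq> cellset scal d0
      \<and> L \<in> lay (a ! k) (b ! k) k L0 (p = trc a b d0))}"
  have memC': "\<exists>L p L0 d0. q = L # p \<and> p \<in> C'' \<and> L0 # d0 \<in> C \<and> cellset scal p \<subseteq> cellset scal d0
      \<and> L \<in> lay (a ! k) (b ! k) k L0 (p = trc a b d0)" if h: "q \<in> C'" for q
    using h unfolding C'_def by blast
  have inC': "L # p \<in> C'" if h: "p \<in> C''" "L0 # d0 \<in> C" "cellset scal p \<subseteq> cellset scal d0"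
      "L \<in> lay (a ! k) (b ! k) k L0 (p = trc a b d0)" for L p L0 d0
    unfolding C'_def using h by blast
  have tx: "x \<in> bx a b k" if h: "L0 # d0 \<in> C" "p = trc a b d0" "x \<in> cellset scal p" for L0 d0 p x
    using isT[OF h(1)] that by auto
  have sub: "lc scal L0 x y"
    if h: "p \<in> C''" "L0 # d0 \<in> C" "cellset scal p \<subseteq> cellset scal d0"
      "L \<in> lay (a ! k) (b ! k) k L0 (p = trc a b d0)" "x \<in> cellset scal p" "lc scal L x y" for L p L0 d0 x y
    using lay_sub[OF kn, of L0 "p = trc a b d0" x L y] cC[OF h(2)] tx[OF h(2) _ h(5)] that by blast
  have okq: "valid_cell scal q \<and> length q = Suc k \<and> cellset scal q \<noteq> {}" if h: "q \<in> C'" for q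
  proof -
    obtain L p L0 d0 where q: "q = L # p" "p \<in> C''" "L0 # d0 \<in> C" "cellset scal p \<subseteq> cellset scal d0"
      "L \<in> lay (a ! k) (b ! k) k L0 (p = trc a b d0)" using memC'[OF h] by blast
    have ok: "layok k L \<and> lbok scal L x" if h: "x \<in> cellset scal p" for x
      using lay_ok[OF kn, of L0 "p = trc a b d0" x L] cC[OF q(3)] tx[OF q(3) _ that] q(4,5) that by blast
    obtain x0 where x0: "x0 \<in> cellset scal p" using cC''[OF q(2)] by blast
    obtain y where "lc scal L x0 y" using exists_y[OF ovs e] ok[OF x0] by blast
    hence "x0 @ [y] \<in> cellset scal q" using x0 q(1) by (simp add: snoc_in_cellset)
    thus ?thesis using cC''[OF q(2)] ok x0 q(1) by (auto simp: valid_cons)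
  qed
  have finC': "finite C'"
  proof -
    let ?S = "(\<Union>L0\<in>hd ` C. lay (a ! k) (b ! k) k L0 True \<union> lay (a ! k) (b ! k) k L0 False) \<times> C''"
    have "C' \<subseteq> (\<lambda>(L, p). L # p) ` ?S"
    proof
      fix q assume "q \<in> C'"
      then obtain L p L0 d0 where q: "q = L # p" "p \<in> C''" "L0 # d0 \<in> C"
        "L \<in> lay (a ! k) (b ! k) k L0 (p = trc a b d0)" using memC' by blast
      have "L0 \<in> hd ` C" using q(3) by force
      hence "(L, p) \<in> ?S" using q by (cases "p = trc a b d0") auto
      thus "q \<in> (\<lambda>(L, p). L # p) ` ?S" using q(1) by force
    qed
    moreover have "finite ?S" using lin_dec_D(1)[OF Suc.prems(1)] lin_dec_D(1)[OF L'']
      by (intro finite_cartesian_product finite_UN_I finite_UnI lay_fin) auto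
    ultimately show ?thesis using finite_subset by blast
  qed
  have djC': "cellset scal q1 \<inter> cellset scal q2 = {}" if h: "q1 \<in> C'" "q2 \<in> C'" "q1 \<noteq> q2" for q1 q2
  proof (rule ccontr)
    assume "cellset scal q1 \<inter> cellset scal q2 \<noteq> {}"
    then obtain z where z: "z \<in> cellset scal q1" "z \<in> cellset scal q2" by blast
    obtain L1 p1 L01 d01 where q1: "q1 = L1 # p1" "p1 \<in> C''" "L01 # d01 \<in> C" "cellset scal p1 \<subseteq> cellset scal d01"
      "L1 \<in> lay (a ! k) (b ! k) k L01 (p1 = trc a b d01)" using memC'[OF h(1)] by blast
    obtain L2 p2 L02 d02 where q2: "q2 = L2 # p2" "p2 \<in> C''" "L02 # d02 \<in> C" "cellset scal p2 \<subseteq> cellset scal d02"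
      "L2 \<in> lay (a ! k) (b ! k) k L02 (p2 = trc a b d02)" using memC'[OF h(2)] by blast
    obtain x y where xy: "z = x @ [y]" "x \<in> cellset scal p1" "lc scal L1 x y"
      using z(1) q1(1) by (auto simp: in_cellset_cons)
    have xy2: "x \<in> cellset scal p2" "lc scal L2 x y" using z(2) q2(1) xy(1) by (auto simp: snoc_in_cellset)
    have pp: "p1 = p2" using lin_dec_D(5)[OF L'' q1(2) q2(2)] xy(2) xy2(1) by blast
    have l1: "lc scal L01 x y" using sub[OF q1(2-5) xy(2,3)] .
    have l2: "lc scal L02 x y" using sub[OF q2(2-5) xy2] .
    have "x @ [y] \<in> cellset scal (L01 # d01)" "x @ [y] \<in> cellset scal (L02 # d02)"
      using l1 l2 q1(4) q2(4) xy(2) xy2(1) by (auto simp: snoc_in_cellset)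
    hence dd: "L01 # d01 = L02 # d02" using lin_dec_D(5)[OF Suc.prems(1) q1(3) q2(3)] by blast
    have "L1 = L2"
      using lay_disj[OF kn, of L01 "p1 = trc a b d01" x L1 L2 y] cC[OF q1(3)] tx[OF q1(3) _ xy(2)] q1(5) q2(5)
        dd pp xy(3) xy2(2) by auto
    thus False using pp q1(1) q2(1) h(3) by simp
  qed
  have coverC': "\<Union>(cellset scal ` C') = Rn (Suc k)"
  proof
    show "\<Union>(cellset scal ` C') \<subseteq> Rn (Suc k)" using okq cellset_len by (force simp: Rn_def)
  next
    show "Rn (Suc k) \<subseteq> \<Union>(cellset scal ` C')"
    proof
      fix z :: "'r list" assume "z \<in> Rn (Suc k)"
      hence zl: "length z = Suc k" by (simp add: Rn_def)
      hence zne: "z \<noteq> []" by auto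
      define x where "x = butlast z" define y where "y = last z"
      have zxy: "z = x @ [y]" using zne x_def y_def by simp
      have "x \<in> Rn k" using zl x_def by (simp add: Rn_def)
      then obtain p where p: "p \<in> C''" "x \<in> cellset scal p" using lin_dec_D(6)[OF L''] by blast
      have "z \<in> \<Union>(cellset scal ` C)" using lin_dec_D(6)[OF Suc.prems(1)] \<open>z \<in> Rn (Suc k)\<close> by simp
      then obtain d where d: "d \<in> C" "z \<in> cellset scal d" by blast
      obtain L0 d0 where dd: "d = L0 # d0" using formC[OF d(1)] by blast
      have xd: "x \<in> cellset scal d0" "lc scal L0 x y" using d(2) dd zxy by (auto simp: snoc_in_cellset)
      have pd: "cellset scal p \<subseteq> cellset scal d0" using par[OF p(1) d(1)[unfolded dd] p(2) xd(1)] .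
      obtain L where L: "L \<in> lay (a ! k) (b ! k) k L0 (p = trc a b d0)" "lc scal L x y"
        using lay_cover[OF kn, of L0 "p = trc a b d0" x y] cC[OF d(1)[unfolded dd]]
          tx[OF d(1)[unfolded dd] _ p(2)] xd(2) by blast
      have "L # p \<in> C'" using inC'[OF p(1) d(1)[unfolded dd] pd L(1)] .
      moreover have "z \<in> cellset scal (L # p)" using zxy p(2) L(2) by (simp add: snoc_in_cellset)
      ultimately show "z \<in> \<Union>(cellset scal ` C')" by blast
    qed
  qed
  have tlC': "tl ` C' = C''"
  proof
    show "tl ` C' \<subseteq> C''" using memC' by force
  next
    show "C'' \<subseteq> tl ` C'"
    proof
      fix p assume p: "p \<in> C''"
      obtain x where x: "x \<in> cellset scal p" using cC''[OF p] by blast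
      have "length x = k" using cellset_len[OF x] cC''[OF p] by simp
      hence "x @ [undefined] \<in> Rn (Suc k)" by (simp add: Rn_def)
      hence "x @ [undefined] \<in> \<Union>(cellset scal ` C)" using lin_dec_D(6)[OF Suc.prems(1)] by simp
      then obtain d where d: "d \<in> C" "x @ [undefined] \<in> cellset scal d" by blast
      obtain L0 d0 where dd: "d = L0 # d0" using formC[OF d(1)] by blast
      have xd: "x \<in> cellset scal d0" "lc scal L0 x undefined" using d(2) dd by (auto simp: snoc_in_cellset)
      have pd: "cellset scal p \<subseteq> cellset scal d0" using par[OF p d(1)[unfolded dd] x xd(1)] .
      obtain L where L: "L \<in> lay (a ! k) (b ! k) k L0 (p = trc a b d0)"
        using lay_cover[OF kn, of L0 "p = trc a b d0" x undefined] cC[OF d(1)[unfolded dd]]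
          tx[OF d(1)[unfolded dd] _ x] xd(2) by blast
      have "L # p \<in> C'" using inC'[OF p d(1)[unfolded dd] pd L] .
      thus "p \<in> tl ` C'" by force
    qed
  qed
  have LC': "lin_dec scal (Suc k) C'"
  proof (rule lin_dec_I)
    show "1 < Suc k \<Longrightarrow> lin_dec scal (Suc k - 1) (tl ` C')" using tlC' L'' by simp
  qed (use finC' okq djC' coverC' in auto)
  have Q1: "trc a b d \<in> C'" if h: "d \<in> C" "cellset scal (trc a b d) \<noteq> {}" for d
  proof -
    obtain L0 d0 where dd: "d = L0 # d0" using formC[OF h(1)] by blast
    have c: "valid_cell scal d0 \<and> layok k L0 \<and> (\<forall>x\<in>cellset scal d0. lbok scal L0 x) \<and> lm L0 \<subseteq> M
      \<and> maps d0 \<subseteq> M \<and> length d0 = k \<and> d0 \<in> C0" using cC h(1) dd by blast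
    have tr: "trc a b d = tlay (a ! k) (b ! k) k L0 # trc a b d0" using dd c by simp
    have "cellset scal (trc a b d0) \<noteq> {}" using h(2) tr by (auto simp: in_cellset_cons)
    hence t1: "trc a b d0 \<in> C''" using P1 c by blast
    have t2: "cellset scal (trc a b d0) \<subseteq> cellset scal d0" using isT h(1) dd by blast
    have lt: "tlay (a ! k) (b ! k) k L0 \<in> lay (a ! k) (b ! k) k L0 (trc a b d0 = trc a b d0)"
      using lay_tlay by simp
    have "tlay (a ! k) (b ! k) k L0 # trc a b d0 \<in> C'"
      using inC'[OF t1 h(1)[unfolded dd] t2 lt] .
    thus ?thesis using tr by simp
  qed
  have Q2: "\<exists>d\<in>C. cellset scal q \<subseteq> cellset scal d \<and> (q = trc a b d \<or> cellset scal q \<inter> bx a b (Suc k) = {})"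
    if h: "q \<in> C'" for q
  proof -
    obtain L p L0 d0 where q: "q = L # p" "p \<in> C''" "L0 # d0 \<in> C" "cellset scal p \<subseteq> cellset scal d0"
      "L \<in> lay (a ! k) (b ! k) k L0 (p = trc a b d0)" using memC'[OF h] by blast
    have c: "valid_cell scal d0 \<and> layok k L0 \<and> (\<forall>x\<in>cellset scal d0. lbok scal L0 x) \<and> lm L0 \<subseteq> M
      \<and> maps d0 \<subseteq> M \<and> length d0 = k \<and> d0 \<in> C0" using cC q(3) by blast
    have s1: "cellset scal q \<subseteq> cellset scal (L0 # d0)"
    proof
      fix z assume "z \<in> cellset scal q"
      then obtain x y where xy: "z = x @ [y]" "x \<in> cellset scal p" "lc scal L x y"
        using q(1) by (auto simp: in_cellset_cons)
      thus "z \<in> cellset scal (L0 # d0)" using sub[OF q(2-5) xy(2,3)] q(4) by (auto simp: snoc_in_cellset)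
    qed
    have s2: "q = trc a b (L0 # d0) \<or> cellset scal q \<inter> bx a b (Suc k) = {}"
    proof (cases "p = trc a b d0")
      case True
      show ?thesis
      proof (cases "L = tlay (a ! k) (b ! k) k L0")
        case True thus ?thesis using \<open>p = trc a b d0\<close> q(1) c by simp
      next
        case False
        have "z \<notin> bx a b (Suc k)" if h: "z \<in> cellset scal q" for z
        proof -
          obtain x y where xy: "z = x @ [y]" "x \<in> cellset scal p" "lc scal L x y"
            using h q(1) by (auto simp: in_cellset_cons)
          have "x \<in> bx a b k" using tx[OF q(3) True xy(2)] .
          thus ?thesis using lay_out[OF kn, of L0 x L y] c q(5) True False xy by (auto simp: bx_snoc)
        qed
        thus ?thesis by blast
      qed
    next
      case False
      have e: "cellset scal p \<inter> bx a b k = {}" using notT[OF q(2,3,4) False] .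
      have "z \<notin> bx a b (Suc k)" if h: "z \<in> cellset scal q" for z
      proof -
        obtain x y where xy: "z = x @ [y]" "x \<in> cellset scal p"
          using h q(1) by (auto simp: in_cellset_cons)
        thus ?thesis using e by (auto simp: bx_snoc)
      qed
      thus ?thesis by blast
    qed
    show ?thesis using s1 s2 q(3) by blast
  qed
  show ?case using LC' Q1 Q2 by blast
qed


lemma fib:
  assumes "valid_cell scal (L0 # d0)" "length (L0 # d0) \<le> n" "maps (L0 # d0) \<subseteq> M"
    "x \<in> cellset scal (trc a b d0)"
  shows "\<exists>y. x @ [y] \<in> cellset scal (trc a b (L0 # d0))"
proof -
  have "0 < n" using assms(2) by simp
  then obtain e :: 'r where e: "0 < e" using ab[of 0] by (metis diff_gt_0_iff_gt)
  have "valid_cell scal (trc a b (L0 # d0))" using trc_valid assms(1-3) by blast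
  hence "lbok scal (tlay (a ! length d0) (b ! length d0) (length d0) L0) x"
    using assms(4) by (simp add: valid_cons)
  then obtain y where "lc scal (tlay (a ! length d0) (b ! length d0) (length d0) L0) x y"
    using exists_y[OF ovs e] by blast
  thus ?thesis using assms(4) by (auto simp: snoc_in_cellset)
qed

lemma spec_main:
  "specM scal k Y D M \<Longrightarrow> 1 \<le> k \<Longrightarrow> k \<le> n \<Longrightarrow> Y \<subseteq> Rn k \<Longrightarrow>
    special_dec scal k (bx a b k \<inter> Y) (trc a b ` {d\<in>D. cellset scal (trc a b d) \<noteq> {}})"
proof (induct k arbitrary: Y D)
  case 0 thus ?case by simp
next
  case (Suc k Y D)
  let ?D' = "trc a b ` {d\<in>D. cellset scal (trc a b d) \<noteq> {}}"
  obtain C where C: "lin_dec scal (Suc k) C" "\<forall>d\<in>C. cellset scal d \<subseteq> Y \<or> cellset scal d \<inter> Y = {}"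
      "D = {d\<in>C. cellset scal d \<inter> Y \<noteq> {}}" "\<forall>d\<in>C. maps d \<subseteq> M"
    using specM_D(1)[OF Suc.prems(1)] by blast
  have cellsC: "valid_cell scal d \<and> length d = Suc k \<and> maps d \<subseteq> M" if h: "d \<in> C" for d
    using lin_dec_D(2,3)[OF C(1) h] C(4) h by blast
  have trcC: "cellset scal (trc a b d) = cellset scal d \<inter> bx a b (Suc k)" if h: "d \<in> C" for d
    using trc_cellset cellsC[OF h] Suc.prems(3) by auto
  obtain C' where C': "lin_dec scal (Suc k) C'"
    "\<And>d. d\<in>C \<Longrightarrow> cellset scal (trc a b d) \<noteq> {} \<Longrightarrow> trc a b d \<in> C'"
    "\<And>q. q\<in>C' \<Longrightarrow> \<exists>d\<in>C. cellset scal q \<subseteq> cellset scal d \<and> (q = trc a b d \<or> cellset scal q \<inter> bx a b (Suc k) = {})"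
    using refine[OF C(1) Suc.prems(3)] C(4) by blast
  have io: "cellset scal q \<subseteq> bx a b (Suc k) \<inter> Y \<or> cellset scal q \<inter> (bx a b (Suc k) \<inter> Y) = {}" if h: "q \<in> C'" for q
  proof -
    obtain d where d: "d \<in> C" "cellset scal q \<subseteq> cellset scal d"
      "q = trc a b d \<or> cellset scal q \<inter> bx a b (Suc k) = {}" using C'(3)[OF h] by blast
    thus ?thesis using trcC[OF d(1)] C(2) by blast
  qed
  have Deq: "?D' = {q\<in>C'. cellset scal q \<inter> (bx a b (Suc k) \<inter> Y) \<noteq> {}}"
  proof
    show "?D' \<subseteq> {q\<in>C'. cellset scal q \<inter> (bx a b (Suc k) \<inter> Y) \<noteq> {}}"
    proof
      fix q assume "q \<in> ?D'"
      then obtain d where d: "d \<in> D" "cellset scal (trc a b d) \<noteq> {}" "q = trc a b d" by blast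
      have dC: "d \<in> C" "cellset scal d \<subseteq> Y" using d(1) C(2,3) by auto
      show "q \<in> {q\<in>C'. cellset scal q \<inter> (bx a b (Suc k) \<inter> Y) \<noteq> {}}"
        using C'(2)[OF dC(1) d(2)] d(2,3) trcC[OF dC(1)] dC(2) by auto
    qed
  next
    show "{q\<in>C'. cellset scal q \<inter> (bx a b (Suc k) \<inter> Y) \<noteq> {}} \<subseteq> ?D'"
    proof
      fix q assume q: "q \<in> {q\<in>C'. cellset scal q \<inter> (bx a b (Suc k) \<inter> Y) \<noteq> {}}"
      obtain d where d: "d \<in> C" "cellset scal q \<subseteq> cellset scal d"
        "q = trc a b d \<or> cellset scal q \<inter> bx a b (Suc k) = {}" using C'(3) q by blast
      have qd: "q = trc a b d" using d(3) q by blast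
      have "d \<in> D" using C(3) d(1,2) q by blast
      moreover have "cellset scal (trc a b d) \<noteq> {}" using q qd by blast
      ultimately show "q \<in> ?D'" using qd by blast
    qed
  qed
  have ldo: "lin_dec_of scal (Suc k) (bx a b (Suc k) \<inter> Y) ?D'"
    unfolding lin_dec_of_def using C'(1) io Deq by blast
  have rest: "special_dec scal k (proj (bx a b (Suc k) \<inter> Y)) (tl ` ?D') \<and> cond_graphs scal ?D' \<and> cond_bands scal k ?D'"
    if k1: "1 < Suc k"
  proof -
    have rec: "specM scal k (proj Y) (tl ` D) M" "cond_graphs scal D" "cond_bands scal k D"
      using specM_D(2)[OF Suc.prems(1)] k1 by auto
    have DC: "D \<subseteq> C" using C(3) by blast
    have pY: "proj Y \<subseteq> Rn k" using Suc.prems(4) unfolding proj_def Rn_def by auto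
    have IH: "special_dec scal k (bx a b k \<inter> proj Y) (trc a b ` {d\<in>tl ` D. cellset scal (trc a b d) \<noteq> {}})"
      using Suc.hyps[OF rec(1) _ _ pY] k1 Suc.prems(3) by simp
    have formD: "\<exists>L0 d0. d = L0 # d0" if h: "d \<in> D" for d
      using cellsC[of d] DC h by (cases d) auto
    have fibD: "\<exists>y. x @ [y] \<in> cellset scal (trc a b d)" if h: "d \<in> D" "x \<in> cellset scal (trc a b (tl d))" for d x
    proof -
      obtain L0 d0 where dd: "d = L0 # d0" using formD[OF h(1)] by blast
      show ?thesis using fib[of L0 d0 x] cellsC[of d] DC h dd Suc.prems(3) by auto
    qed
    have peq: "proj (bx a b (Suc k) \<inter> Y) = bx a b k \<inter> proj Y"
    proof
      show "proj (bx a b (Suc k) \<inter> Y) \<subseteq> bx a b k \<inter> proj Y"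
        unfolding proj_def using bx_butlast by blast
    next
      show "bx a b k \<inter> proj Y \<subseteq> proj (bx a b (Suc k) \<inter> Y)"
      proof
        fix x assume x: "x \<in> bx a b k \<inter> proj Y"
        then obtain z where z: "z \<in> Y" "x = butlast z" unfolding proj_def by blast
        have "z \<in> Rn (Suc k)" using z(1) Suc.prems(4) by blast
        then obtain d where d: "d \<in> C" "z \<in> cellset scal d" using lin_dec_D(6)[OF C(1)] by blast
        have dD: "d \<in> D" using C(3) d z(1) by blast
        obtain L0 d0 where dd: "d = L0 # d0" using formD[OF dD] by blast
        have "x \<in> cellset scal d0" using d(2) dd z(2) by (auto simp: in_cellset_cons)
        moreover have "d0 \<in> C \<longrightarrow> True" by simp
        have "cellset scal (trc a b d0) = cellset scal d0 \<inter> bx a b k"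
          using trc_cellset[of d0] cellsC[OF d(1)] dd Suc.prems(3) by (auto simp: valid_cons)
        ultimately have "x \<in> cellset scal (trc a b (tl d))" using x dd by simp
        then obtain y where "x @ [y] \<in> cellset scal (trc a b d)" using fibD[OF dD] by blast
        hence "x @ [y] \<in> bx a b (Suc k) \<inter> Y" using trcC[OF d(1)] C(2) d dD C(3) by blast
        thus "x \<in> proj (bx a b (Suc k) \<inter> Y)" unfolding proj_def by force
      qed
    qed
    have teq: "tl ` ?D' = trc a b ` {d\<in>tl ` D. cellset scal (trc a b d) \<noteq> {}}"
    proof
      show "tl ` ?D' \<subseteq> trc a b ` {d\<in>tl ` D. cellset scal (trc a b d) \<noteq> {}}"
      proof
        fix q assume "q \<in> tl ` ?D'"
        then obtain q0 where q0: "q0 \<in> ?D'" "q = tl q0" by (rule imageE)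
        obtain d where d: "d \<in> {d\<in>D. cellset scal (trc a b d) \<noteq> {}}" "q0 = trc a b d"
          using q0(1) by (rule imageE)
        have d1: "d \<in> D" "cellset scal (trc a b d) \<noteq> {}" using d(1) by auto
        obtain L0 d0 where dd: "d = L0 # d0" using formD[OF d1(1)] by blast
        have ne: "cellset scal (trc a b d0) \<noteq> {}" using d1(2) dd by (auto simp: in_cellset_cons)
        have "d0 \<in> tl ` D" using d1(1) dd by (metis image_eqI list.sel(3))
        hence "d0 \<in> {d\<in>tl ` D. cellset scal (trc a b d) \<noteq> {}}" using ne by simp
        moreover have "q = trc a b d0" using q0(2) d(2) dd by simp
        ultimately show "q \<in> trc a b ` {d\<in>tl ` D. cellset scal (trc a b d) \<noteq> {}}" by (rule rev_image_eqI)
      qed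
    next
      show "trc a b ` {d\<in>tl ` D. cellset scal (trc a b d) \<noteq> {}} \<subseteq> tl ` ?D'"
      proof
        fix q assume "q \<in> trc a b ` {d\<in>tl ` D. cellset scal (trc a b d) \<noteq> {}}"
        then obtain d0 where d0: "d0 \<in> {d\<in>tl ` D. cellset scal (trc a b d) \<noteq> {}}" "q = trc a b d0"
          by (rule imageE)
        have d01: "d0 \<in> tl ` D" "cellset scal (trc a b d0) \<noteq> {}" using d0(1) by auto
        obtain d where d: "d \<in> D" "d0 = tl d" using d01(1) by (rule imageE) 
        obtain x where "x \<in> cellset scal (trc a b (tl d))" using d01(2) d(2) by blast
        then obtain y where "x @ [y] \<in> cellset scal (trc a b d)" using fibD[OF d(1)] by blast
        hence "d \<in> {d\<in>D. cellset scal (trc a b d) \<noteq> {}}" using d(1) by auto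
        hence "trc a b d \<in> ?D'" by (rule imageI)
        moreover have "q = tl (trc a b d)" using d0(2) d(2) tl_trc by metis
        ultimately show "q \<in> tl ` ?D'" by (rule rev_image_eqI)
      qed
    qed
    have sub_tl: "cellset scal (trc a b (tl d)) \<subseteq> cellset scal (tl d)" if h: "d \<in> D" for d
    proof -
      obtain L0 d0 where dd: "d = L0 # d0" using formD[OF h] by blast
      show ?thesis using trc_cellset[of d0] cellsC[of d] DC h dd Suc.prems(3) by (auto simp: valid_cons)
    qed
    have cg: "cond_graphs scal ?D'"
      unfolding cond_graphs_def
    proof (intro ballI allI impI)
      fix q1 q2 cs c ds e V
      assume q1: "q1 \<in> ?D'" and q2: "q2 \<in> ?D'" and h1: "hd q1 = Gr cs c" and h2: "hd q2 = Gr ds e"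
        and V: "V \<in> tl ` ?D'"
      obtain d1 where d1: "d1 \<in> D" "q1 = trc a b d1" using q1 by blast
      obtain d2 where d2: "d2 \<in> D" "q2 = trc a b d2" using q2 by blast
      obtain d3 where d3: "d3 \<in> D" "V = trc a b (tl d3)" using V tl_trc by force
      have "hd d1 = Gr cs c" using hd_trc_Gr[of a b d1 cs c] h1 d1(2) by simp
      moreover have "hd d2 = Gr ds e" using hd_trc_Gr[of a b d2 ds e] h2 d2(2) by simp
      moreover have "tl d3 \<in> tl ` D" using d3 by blast
      ultimately have tri: "(\<forall>v\<in>cellset scal (tl d3). lval scal cs c v < lval scal ds e v) \<or>
           (\<forall>v\<in>cellset scal (tl d3). lval scal cs c v = lval scal ds e v) \<or>
           (\<forall>v\<in>cellset scal (tl d3). lval scal cs c v > lval scal ds e v)"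
        using rec(2) d1(1) d2(1) unfolding cond_graphs_def by blast
      show "(\<forall>v\<in>cellset scal V. lval scal cs c v < lval scal ds e v) \<or>
           (\<forall>v\<in>cellset scal V. lval scal cs c v = lval scal ds e v) \<or>
           (\<forall>v\<in>cellset scal V. lval scal cs c v > lval scal ds e v)"
        using tri sub_tl[OF d3(1)] d3(2) by blast
    qed
    have cb: "cond_bands scal k ?D'"
      unfolding cond_bands_def
    proof (intro ballI allI impI notI)
      fix q1 q2 hs h f' g'
      assume q1: "q1 \<in> ?D'" and q2: "q2 \<in> ?D'" and h1: "hd q1 = Gr hs h" and h2: "hd q2 = Bd f' g'"
        and ex: "\<exists>c\<in>cl k (cellset scal (tl q1)) \<inter> cl k (cellset scal (tl q2)).
              lo_lt scal f' c (lval scal hs h c) \<and> hi_gt scal g' c (lval scal hs h c)"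
      obtain d1 where d1: "d1 \<in> D" "q1 = trc a b d1" using q1 by blast
      obtain d2 where d2: "d2 \<in> D" "q2 = trc a b d2" using q2 by blast
      have hd1: "hd d1 = Gr hs h" using hd_trc_Gr[of a b d1 hs h] h1 d1(2) by simp
      have "d2 \<noteq> []" using formD[OF d2(1)] by auto
      then obtain f g d0 where d20: "d2 = Bd f g # d0" "f' = lowb (a ! length d0) (length d0) f"
          "g' = uppb (b ! length d0) (length d0) g"
        using hd_trc_Bd[of a b d2 f' g'] h2 d2(2) by blast
      obtain c where c: "c \<in> cl k (cellset scal (tl q1))" "c \<in> cl k (cellset scal (tl q2))"
        "lo_lt scal f' c (lval scal hs h c)" "hi_gt scal g' c (lval scal hs h c)" using ex by blast
      have "tl q1 = trc a b (tl d1)" "tl q2 = trc a b (tl d2)" using d1(2) d2(2) tl_trc by auto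
      hence "c \<in> cl k (cellset scal (tl d1))" "c \<in> cl k (cellset scal (tl d2))"
        using c(1,2) cl_mono[OF sub_tl[OF d1(1)], of k] cl_mono[OF sub_tl[OF d2(1)], of k] by auto
      moreover have "lo_lt scal f c (lval scal hs h c)" using lo_lowb c(3) unfolding d20(2) by blast
      moreover have "hi_gt scal g c (lval scal hs h c)" using hi_uppb c(4) unfolding d20(3) by blast
      moreover have hd2: "hd d2 = Bd f g" using d20(1) by simp
      ultimately show False using rec(3)[unfolded cond_bands_def, rule_format, OF d1(1) d2(1) hd1 hd2] by blast
    qed
    show ?thesis using IH peq teq cg cb by simp
  qed
  show ?case
    using ldo rest by (subst special_dec.simps) simp
qed

end

section \<open>Existence of a large box\<close>

lemma sum_map2: "length xs = length ys \<Longrightarrow> sum_list (map2 f xs ys) = (\<Sum>i<length xs. f (xs ! i) (ys ! i))"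
  by (simp add: sum_list_sum_nth atLeast0LessThan)

lemma lval_bounds:
  fixes scal :: "'l::{division_ring,linordered_ring_strict} \<Rightarrow> 'r::linordered_ab_group_add \<Rightarrow> 'r"
  assumes ovs: "ordered_vs scal" and "length cs = m" and x: "x \<in> bx a b m"
  shows "(\<Sum>i<m. min (scal (cs ! i) (a ! i)) (scal (cs ! i) (b ! i))) + c \<le> lval scal cs c x \<and>
         lval scal cs c x \<le> (\<Sum>i<m. max (scal (cs ! i) (a ! i)) (scal (cs ! i) (b ! i))) + c"
proof -
  have lx: "length x = m" "\<And>i. i < m \<Longrightarrow> a ! i < x ! i \<and> x ! i < b ! i" using x unfolding bx_def by auto
  have lv: "lval scal cs c x = (\<Sum>i<m. scal (cs ! i) (x ! i)) + c"
    unfolding lval_def using sum_map2[of cs x scal] assms(2) lx(1) by simp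
  have "(\<Sum>i<m. min (scal (cs ! i) (a ! i)) (scal (cs ! i) (b ! i))) \<le> (\<Sum>i<m. scal (cs ! i) (x ! i))"
    by (rule sum_mono) (use ovs_between[OF ovs] lx(2) in blast)
  moreover have "(\<Sum>i<m. scal (cs ! i) (x ! i)) \<le> (\<Sum>i<m. max (scal (cs ! i) (a ! i)) (scal (cs ! i) (b ! i)))"
    by (rule sum_mono) (use ovs_between[OF ovs] lx(2) in blast)
  ultimately show ?thesis using lv by simp
qed

lemma bx_append: "j \<le> length a \<Longrightarrow> j \<le> length b \<Longrightarrow> bx (a @ a') (b @ b') j = bx a b j"
  unfolding bx_def by (auto simp: nth_append)

lemma box_ext:
  fixes scal :: "'l::{division_ring,linordered_ring_strict} \<Rightarrow> 'r::linordered_ab_group_add \<Rightarrow> 'r"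
  assumes ovs: "ordered_vs scal" and fM: "finite M" and m: "m < length a1" "length b1 = length a1"
    and ab1: "\<forall>i<length a1. a1 ! i < b1 ! i"
    and la: "length a = m" "length b = m" and ab: "\<forall>i<m. a ! i < b ! i \<and> a ! i \<le> a1 ! i \<and> b1 ! i \<le> b ! i"
    and lg: "large scal a b m M"
  shows "\<exists>a' b'. length a' = Suc m \<and> length b' = Suc m \<and>
     (\<forall>i<Suc m. a' ! i < b' ! i \<and> a' ! i \<le> a1 ! i \<and> b1 ! i \<le> b' ! i) \<and> large scal a' b' (Suc m) M"
proof -
  define Ms where "Ms = {p \<in> M. length (fst p) = m}"
  have fMs: "finite Ms" using fM unfolding Ms_def by simp
  define lo where "lo = (\<lambda>p. (\<Sum>i<m. min (scal (fst p ! i) (a ! i)) (scal (fst p ! i) (b ! i))) + snd p)"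
  define hi where "hi = (\<lambda>p. (\<Sum>i<m. max (scal (fst p ! i) (a ! i)) (scal (fst p ! i) (b ! i))) + snd p)"
  define A where "A = Min (insert (a1 ! m) (lo ` Ms))"
  define Bv where "Bv = Max (insert (b1 ! m) (hi ` Ms))"
  define e where "e = b1 ! m - a1 ! m"
  have e: "0 < e" using ab1 m(1) unfolding e_def by simp
  have A1: "A \<le> a1 ! m" unfolding A_def using fMs by simp
  have A2: "A \<le> lo p" if "p \<in> Ms" for p unfolding A_def using fMs that by simp
  have B1: "b1 ! m \<le> Bv" unfolding Bv_def using fMs by simp
  have B2: "hi p \<le> Bv" if "p \<in> Ms" for p unfolding Bv_def using fMs that by simp
  define a' where "a' = a @ [A - e]"
  define b' where "b' = b @ [Bv + e]"
  have l': "length a' = Suc m" "length b' = Suc m" unfolding a'_def b'_def using la by auto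
  have am: "a' ! m = A - e" "b' ! m = Bv + e" unfolding a'_def b'_def using la by (auto simp: nth_append)
  have ai: "a' ! i = a ! i" "b' ! i = b ! i" if "i < m" for i unfolding a'_def b'_def using la that
    by (auto simp: nth_append)
  have c1: "\<forall>i<Suc m. a' ! i < b' ! i \<and> a' ! i \<le> a1 ! i \<and> b1 ! i \<le> b' ! i"
  proof (intro allI impI)
    fix i assume "i < Suc m"
    hence "i < m \<or> i = m" by auto
    thus "a' ! i < b' ! i \<and> a' ! i \<le> a1 ! i \<and> b1 ! i \<le> b' ! i"
    proof
      assume "i < m" thus ?thesis using ai ab by auto
    next
      assume i: "i = m"
      have f1: "A - e < A" using e by simp
      have f3: "Bv < Bv + e" using e by simp
      have "a1 ! m < b1 ! m" using ab1 m(1) by simp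
      hence f2: "A < Bv" using order.strict_trans1[OF A1] order.strict_trans2[OF _ B1] by blast
      have g1: "A - e < Bv + e" using less_trans[OF less_trans[OF f1 f2] f3] .
      have g2: "A - e \<le> a1 ! m" using less_imp_le[OF order.strict_trans2[OF f1 A1]] .
      have g3: "b1 ! m \<le> Bv + e" using order.trans[OF B1 less_imp_le[OF f3]] .
      show ?thesis using i am g1 g2 g3 by simp
    qed
  qed
  have c2: "large scal a' b' (Suc m) M"
    unfolding large_def
  proof (intro allI impI)
    fix cs c x assume cM: "(cs, c) \<in> M" and lt: "length cs < Suc m" and x: "x \<in> bx a' b' (length cs)"
    have xb: "x \<in> bx a b (length cs)" using x bx_append[of "length cs" a b "[A - e]" "[Bv + e]"] lt la
      unfolding a'_def b'_def by simp
    show "a' ! length cs < lval scal cs c x \<and> lval scal cs c x < b' ! length cs"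
    proof (cases "length cs < m")
      case True
      thus ?thesis using lg cM xb ai[OF True] unfolding large_def by simp
    next
      case False
      hence csm: "length cs = m" using lt by simp
      have p: "(cs, c) \<in> Ms" unfolding Ms_def using cM csm by simp
      have bnd: "lo (cs, c) \<le> lval scal cs c x \<and> lval scal cs c x \<le> hi (cs, c)"
        using lval_bounds[OF ovs csm, of x a b c] xb csm unfolding lo_def hi_def by simp
      have f1: "A - e < A" using e by simp
      have f3: "Bv < Bv + e" using e by simp
      have "A - e < lval scal cs c x" using order.strict_trans2[OF f1 order.trans[OF A2[OF p]]] bnd by blast
      moreover have "lval scal cs c x < Bv + e" using order.strict_trans1[OF order.trans[OF _ B2[OF p]] f3] bnd by blast
      ultimately show ?thesis using am csm by simp
    qed
  qed
  show ?thesis using l' c1 c2 by blast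
qed

lemma box_exists:
  fixes scal :: "'l::{division_ring,linordered_ring_strict} \<Rightarrow> 'r::linordered_ab_group_add \<Rightarrow> 'r"
  assumes ovs: "ordered_vs scal" and fM: "finite M" and "length b1 = length a1"
    and ab1: "\<forall>i<length a1. a1 ! i < b1 ! i" and "m \<le> length a1"
  shows "\<exists>a b. length a = m \<and> length b = m \<and>
     (\<forall>i<m. a ! i < b ! i \<and> a ! i \<le> a1 ! i \<and> b1 ! i \<le> b ! i) \<and> large scal a b m M"
  using assms(5)
proof (induct m)
  case 0
  show ?case by (rule exI[of _ "[]"], rule exI[of _ "[]"]) (simp add: large_def)
next
  case (Suc m)
  then obtain a b where h: "length a = m" "length b = m"
     "\<forall>i<m. a ! i < b ! i \<and> a ! i \<le> a1 ! i \<and> b1 ! i \<le> b ! i" "large scal a b m M" by auto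
  show ?case using box_ext[OF ovs fM _ assms(3) ab1 h] Suc.prems by simp
qed


theorem mainTheorem12:
  fixes scal :: "'l::{division_ring,linordered_ring_strict} \<Rightarrow> 'r::{linordered_ab_group_add,linorder_topology} \<Rightarrow> 'r"
    and n :: nat and Y :: "'r list set" and \<C> :: "'r list set set" and B1 :: "'r list set"
  assumes "ordered_vs scal"
    and "1 \<le> n"
    and "Y \<subseteq> Rn n"
    and "definable scal n Y"
    and "special_lin_dec scal n Y \<C>"
    and "is_box n B1"
  shows "\<exists>B. is_box n B \<and> B1 \<subseteq> B \<and>
           special_lin_dec scal n (B \<inter> Y) ({B \<inter> D | D. D \<in> \<C>} - {{}})"
proof -
  obtain a1 b1 where ab1: "length a1 = n" "length b1 = n" "\<forall>i<n. a1 ! i < b1 ! i"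
      "B1 = {x. length x = n \<and> (\<forall>i<n. a1 ! i < x ! i \<and> x ! i < b1 ! i)}"
    using assms(6) unfolding is_box_def by blast
  obtain D where D: "special_dec scal n Y D" "cellset scal ` D = \<C>"
    using assms(5) unfolding special_lin_dec_def by blast
  obtain M where M: "finite M" "specM scal n Y D M" using specM_ex[OF D(1)] by blast
  obtain a b where abx: "length a = n" "length b = n" "\<forall>i<n. a ! i < b ! i \<and> a ! i \<le> a1 ! i \<and> b1 ! i \<le> b ! i"
      "large scal a b n M"
    using box_exists[OF assms(1) M(1), of b1 a1 n] ab1 by auto
  interpret bxctx scal a b n M using assms(1) abx by unfold_locales auto
  let ?B = "bx a b n"
  have box: "is_box n ?B" unfolding is_box_def
    by (rule exI[of _ a], rule exI[of _ b]) (use abx in \<open>simp add: bx_def\<close>)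
  have sub: "B1 \<subseteq> ?B"
  proof
    fix x assume "x \<in> B1"
    hence x: "length x = n" "\<And>i. i < n \<Longrightarrow> a1 ! i < x ! i \<and> x ! i < b1 ! i" using ab1(4) by auto
    have "a ! i < x ! i \<and> x ! i < b ! i" if "i < n" for i
      using order.strict_trans1[of "a ! i" "a1 ! i" "x ! i"] order.strict_trans2[of "x ! i" "b1 ! i" "b ! i"]
        x(2)[OF that] abx(3) that by blast
    thus "x \<in> ?B" unfolding bx_def using x(1) by blast
  qed
  let ?D' = "trc a b ` {d\<in>D. cellset scal (trc a b d) \<noteq> {}}"
  have sd: "special_dec scal n (?B \<inter> Y) ?D'" using spec_main[OF M(2) assms(2) le_refl assms(3)] .
  have cd: "cellset scal (trc a b d) = cellset scal d \<inter> ?B" if "d \<in> D" for d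
    using specM_cells[OF M(2) that] trc_cellset by auto
  have ceq: "cellset scal ` ?D' = {?B \<inter> S | S. S \<in> \<C>} - {{}}"
  proof
    show "cellset scal ` ?D' \<subseteq> {?B \<inter> S | S. S \<in> \<C>} - {{}}"
    proof
      fix T assume "T \<in> cellset scal ` ?D'"
      then obtain q where q: "q \<in> ?D'" "T = cellset scal q" by (rule imageE)
      obtain d where d: "d \<in> {d\<in>D. cellset scal (trc a b d) \<noteq> {}}" "q = trc a b d" using q(1) by (rule imageE)
      have d1: "d \<in> D" "cellset scal (trc a b d) \<noteq> {}" using d(1) by auto
      have "T = ?B \<inter> cellset scal d" using q(2) d(2) cd[OF d1(1)] by blast
      moreover have "cellset scal d \<in> \<C>" using D(2) d1(1) by blast
      ultimately show "T \<in> {?B \<inter> S | S. S \<in> \<C>} - {{}}" using d1(2) q(2) d(2) by blast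
    qed
    show "{?B \<inter> S | S. S \<in> \<C>} - {{}} \<subseteq> cellset scal ` ?D'"
    proof
      fix T assume "T \<in> {?B \<inter> S | S. S \<in> \<C>} - {{}}"
      then obtain d where d: "d \<in> D" "T = ?B \<inter> cellset scal d" "T \<noteq> {}" using D(2) by blast
      have "T = cellset scal (trc a b d)" using cd[OF d(1)] d(2) by blast
      thus "T \<in> cellset scal ` ?D'" using d by blast
    qed
  qed
  have "special_lin_dec scal n (?B \<inter> Y) ({?B \<inter> S | S. S \<in> \<C>} - {{}})"
    unfolding special_lin_dec_def by (rule exI[of _ ?D']) (simp add: sd ceq)
  thus ?thesis using box sub by (intro exI[of _ ?B]) simp
qed

end
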